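(* Let $\sigma_W,\sigma_B>0$ and let $G$ be a regular simple undirected graph with vertex set $[n]$. If $(\mathbf{W},\mathbf{B})$ is a separable, $(\sigma_W,\sigma_B)$-disordered energy landscape on $G$, and $I\in V(G)$ is uniformly random and independent of $(\mathbf{W},\mathbf{B})$, then \[ \mathbb{E}(\mathrm{Var}\,A_I)\leq 4\sigma_B^2\quad\text{and}\quad\mathbb{E}\big((\mathrm{Var}\,A_I)^2\big)\leq 1720\,\sigma_B^4, \] where $A_i=\log\sum_{j:\,j\sim i}\exp(-B_{ij})$.
   Context: $j\sim i$ means $(i,j)\in E(G)$. A $(\sigma_W,\sigma_B)$-disordered energy landscape on $G$ is a pair $(\mathbf{W},\mathbf{B})$ of i.i.d. $\mathcal{N}(0,\sigma_W^2)$ well depths $\mathbf{W}=(W_i)_{i\in V(G)}$ and barrier heights $\mathbf{B}=(B_{ij})_{(i,j)\in E(G)}$ with $B_{ij}=B_{ji}\sim\mathcal{N}(0,\sigma_B^2)$ for every edge. It is separable if there exist $f:\mathbb{R}\to\mathbb{R}$ and $\sigma>0$ such that for every vertex $i$, $(B_{ij}-f(W_i))_{j:\,j\sim i}$ is a vector of i.i.d. $\mathcal{N}(0,\sigma^2)$ random variables, also independent of $W_i$. $\mathrm{Var}\,A_I$ denotes the variance over $I$ conditional on $(\mathbf{W},\mathbf{B})$, i.e. $\frac1n\sum_i(A_i-\bar A)^2$; $\mathbb{E}$ is over the landscape. *)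

theory Defs
  imports "HOL-Probability.Probability"
begin

definition simple_graph_on :: "nat \<Rightarrow> (nat \<Rightarrow> nat \<Rightarrow> bool) \<Rightarrow> bool" where
  "simple_graph_on n E \<longleftrightarrow>
     (\<forall>i j. E i j \<longrightarrow> i < n \<and> j < n) \<and> (\<forall>i j. E i j \<longrightarrow> E j i) \<and> (\<forall>i. \<not> E i i)"

definition nbrs :: "nat \<Rightarrow> (nat \<Rightarrow> nat \<Rightarrow> bool) \<Rightarrow> nat \<Rightarrow> nat set" where
  "nbrs n E i = {j \<in> {0..<n}. E i j}"

definition regular_graph :: "nat \<Rightarrow> (nat \<Rightarrow> nat \<Rightarrow> bool) \<Rightarrow> bool" where
  "regular_graph n E \<longleftrightarrow> (\<exists>d. \<forall>i<n. card (nbrs n E i) = d)"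

definition disordered_landscape ::
  "'a measure \<Rightarrow> nat \<Rightarrow> (nat \<Rightarrow> nat \<Rightarrow> bool) \<Rightarrow> real \<Rightarrow> real \<Rightarrow>
   (nat \<Rightarrow> 'a \<Rightarrow> real) \<Rightarrow> (nat \<Rightarrow> nat \<Rightarrow> 'a \<Rightarrow> real) \<Rightarrow> bool" where
  "disordered_landscape M n E \<sigma>W \<sigma>B W B \<longleftrightarrow>
     prob_space.indep_vars M (\<lambda>_. borel) W {0..<n} \<and>
     (\<forall>i<n. distributed M lborel (W i) (normal_density 0 \<sigma>W)) \<and>
     (\<forall>i j. E i j \<longrightarrow> B i j = B j i) \<and>
     prob_space.indep_vars M (\<lambda>_. borel) (\<lambda>(i, j). B i j) {(i, j). E i j \<and> i < j} \<and>
     (\<forall>i j. E i j \<longrightarrow> distributed M lborel (B i j) (normal_density 0 \<sigma>B))"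

definition separable ::
  "'a measure \<Rightarrow> nat \<Rightarrow> (nat \<Rightarrow> nat \<Rightarrow> bool) \<Rightarrow>
   (nat \<Rightarrow> 'a \<Rightarrow> real) \<Rightarrow> (nat \<Rightarrow> nat \<Rightarrow> 'a \<Rightarrow> real) \<Rightarrow> bool" where
  "separable M n E W B \<longleftrightarrow>
     (\<exists>(f :: real \<Rightarrow> real) (\<sigma> :: real). \<sigma> > 0 \<and>
       (\<forall>i<n.
          prob_space.indep_vars M (\<lambda>_. borel)
            (\<lambda>k. case k of None \<Rightarrow> W i | Some j \<Rightarrow> (\<lambda>\<omega>. B i j \<omega> - f (W i \<omega>)))
            (insert None (Some ` nbrs n E i)) \<and>
          (\<forall>j \<in> nbrs n E i. distributed M lborel (\<lambda>\<omega>. B i j \<omega> - f (W i \<omega>)) (normal_density 0 \<sigma>))))"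

definition A_val :: "nat \<Rightarrow> (nat \<Rightarrow> nat \<Rightarrow> bool) \<Rightarrow> (nat \<Rightarrow> nat \<Rightarrow> 'a \<Rightarrow> real) \<Rightarrow> nat \<Rightarrow> 'a \<Rightarrow> real" where
  "A_val n E B i \<omega> = ln (\<Sum>j \<in> nbrs n E i. exp (- B i j \<omega>))"

text \<open>Var A_I for I uniform on [n], conditional on the landscape.\<close>

definition var_A :: "nat \<Rightarrow> (nat \<Rightarrow> nat \<Rightarrow> bool) \<Rightarrow> (nat \<Rightarrow> nat \<Rightarrow> 'a \<Rightarrow> real) \<Rightarrow> 'a \<Rightarrow> real" where
  "var_A n E B \<omega> =
     (let m = (\<Sum>i<n. A_val n E B i \<omega>) / real n
      in (\<Sum>i<n. (A_val n E B i \<omega> - m)\<^sup>2) / real n)"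

end

theory Submission
  imports Defs
begin


lemma seg_bound:
  fixes g g' :: "real \<Rightarrow> real" and a b :: real
  assumes ab: "a \<le> b"
    and der: "\<And>t. (g has_real_derivative g' t) (at t)"
    and cont: "continuous_on UNIV g'"
  shows "(g b - g a)\<^sup>2 \<le> (b - a) * integral {a..b} (\<lambda>t. (g' t)\<^sup>2)"
proof (cases "a = b")
  case True then show ?thesis by simp
next
  case False
  then have lt: "a < b" using ab by simp
  define D where "D = g b - g a"
  define c where "c = D / (b - a)"
  have F: "(g' has_integral D) {a..b}"
    unfolding D_def
    by (rule fundamental_theorem_of_calculus[OF ab])
       (metis der has_real_derivative_iff_has_vector_derivative has_vector_derivative_at_within)
  have I2: "(\<lambda>t. (g' t)\<^sup>2) integrable_on {a..b}"
    by (intro integrable_continuous_interval continuous_on_power continuous_on_subset[OF cont]) auto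
  then have I2h: "((\<lambda>t. (g' t)\<^sup>2) has_integral integral {a..b} (\<lambda>t. (g' t)\<^sup>2)) {a..b}"
    by (simp add: has_integral_integral)
  have "((\<lambda>t. (g' t)\<^sup>2 - 2 * c * g' t + c\<^sup>2) has_integral
          (integral {a..b} (\<lambda>t. (g' t)\<^sup>2) - 2 * c * D + c\<^sup>2 * (b - a))) {a..b}"
  proof -
    have c2: "((\<lambda>t. c\<^sup>2) has_integral c\<^sup>2 * (b - a)) {a..b}"
      using has_integral_const_real[of "c\<^sup>2" a b] ab by (simp add: mult.commute)
    show ?thesis
      by (rule has_integral_add[OF has_integral_diff[OF I2h has_integral_mult_right[OF F]] c2])
  qed
  moreover have "\<And>t. 0 \<le> (g' t)\<^sup>2 - 2 * c * g' t + c\<^sup>2"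
  proof -
    fix t have "(g' t)\<^sup>2 - 2 * c * g' t + c\<^sup>2 = (g' t - c)\<^sup>2" by (simp add: power2_eq_square algebra_simps)
    then show "0 \<le> (g' t)\<^sup>2 - 2 * c * g' t + c\<^sup>2" by simp
  qed
  ultimately have "0 \<le> integral {a..b} (\<lambda>t. (g' t)\<^sup>2) - 2 * c * D + c\<^sup>2 * (b - a)"
    by (rule has_integral_nonneg)
  moreover have "2 * c * D - c\<^sup>2 * (b - a) = D\<^sup>2 / (b - a)"
    using lt unfolding c_def by (simp add: divide_simps power2_eq_square)
  ultimately have "D\<^sup>2 / (b - a) \<le> integral {a..b} (\<lambda>t. (g' t)\<^sup>2)" by linarith
  then have "D\<^sup>2 \<le> (b - a) * integral {a..b} (\<lambda>t. (g' t)\<^sup>2)" using lt by (simp add: pos_divide_le_eq mult.commute)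
  then show ?thesis by (simp add: D_def)
qed

lemma seg_nn:
  fixes g g' :: "real \<Rightarrow> real" and a b :: real
  assumes ab: "a \<le> b"
    and der: "\<And>t. (g has_real_derivative g' t) (at t)"
    and cont: "continuous_on UNIV g'"
  shows "ennreal ((g b - g a)\<^sup>2) \<le> ennreal (b - a) * (\<integral>\<^sup>+t. ennreal ((g' t)\<^sup>2) * indicator {a..b} t \<partial>lborel)"
proof -
  have I2: "(\<lambda>t. (g' t)\<^sup>2) integrable_on {a..b}"
    by (intro integrable_continuous_interval continuous_on_power continuous_on_subset[OF cont]) auto
  then have "((\<lambda>t. (g' t)\<^sup>2) has_integral integral {a..b} (\<lambda>t. (g' t)\<^sup>2)) {a..b}"
    by (simp add: has_integral_integral)
  then have "((\<lambda>t. indicator {a..b} t * (g' t)\<^sup>2) has_integral integral {a..b} (\<lambda>t. (g' t)\<^sup>2)) UNIV"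
  proof -
    have "(\<lambda>t. indicator {a..b} t * (g' t)\<^sup>2) = (\<lambda>x. if x \<in> {a..b} then (g' x)\<^sup>2 else 0)"
      by (auto simp: indicator_def)
    moreover assume "((\<lambda>t. (g' t)\<^sup>2) has_integral integral {a..b} (\<lambda>t. (g' t)\<^sup>2)) {a..b}"
    then have "((\<lambda>x. if x \<in> {a..b} then (g' x)\<^sup>2 else 0) has_integral integral {a..b} (\<lambda>t. (g' t)\<^sup>2)) UNIV"
      by (subst has_integral_restrict_UNIV)
    ultimately show ?thesis by simp
  qed
  moreover have gm: "g' \<in> borel_measurable borel"
    using cont by (simp add: borel_measurable_continuous_onI)
  ultimately have eq: "integral\<^sup>N lborel (\<lambda>t. indicator {a..b} t * (g' t)\<^sup>2) = integral {a..b} (\<lambda>t. (g' t)\<^sup>2)"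
    by (intro nn_integral_has_integral_lborel) auto
  have "(\<integral>\<^sup>+t. ennreal ((g' t)\<^sup>2) * indicator {a..b} t \<partial>lborel) = integral\<^sup>N lborel (\<lambda>t. indicator {a..b} t * (g' t)\<^sup>2)"
    by (intro nn_integral_cong) (simp split: split_indicator)
  also note eq
  finally have e2: "(\<integral>\<^sup>+t. ennreal ((g' t)\<^sup>2) * indicator {a..b} t \<partial>lborel) = ennreal (integral {a..b} (\<lambda>t. (g' t)\<^sup>2))" .
  have "(g b - g a)\<^sup>2 \<le> (b - a) * integral {a..b} (\<lambda>t. (g' t)\<^sup>2)"
    by (rule seg_bound[OF ab der cont])
  moreover have "0 \<le> integral {a..b} (\<lambda>t. (g' t)\<^sup>2)"
    using I2 by (intro integral_nonneg) auto
  ultimately show ?thesis unfolding e2 using ab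
    by (subst ennreal_mult[symmetric]) (auto intro!: ennreal_leI)
qed

lemma phi_tail:
  fixes \<sigma> t :: real
  assumes s: "\<sigma> > 0" and t: "t > 0"
  shows "(\<integral>\<^sup>+y. ennreal (normal_density 0 \<sigma> y * \<bar>y\<bar>) * indicator {t..} y \<partial>lborel) = ennreal (\<sigma>\<^sup>2 * normal_density 0 \<sigma> t)"
proof -
  have "(\<integral>\<^sup>+y. ennreal (normal_density 0 \<sigma> y * \<bar>y\<bar>) * indicator {t..} y \<partial>lborel)
      = (\<integral>\<^sup>+y. ennreal (normal_density 0 \<sigma> y * y) * indicator {t..} y \<partial>lborel)"
    using t by (intro nn_integral_cong) (auto split: split_indicator)
  also have "\<dots> = ennreal (0 - (- \<sigma>\<^sup>2 * normal_density 0 \<sigma> t))"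
  proof (rule nn_integral_FTC_atLeast)
    show "(\<lambda>y. normal_density 0 \<sigma> y * y) \<in> borel_measurable borel" by measurable
    show "\<And>x. t \<le> x \<Longrightarrow> 0 \<le> normal_density 0 \<sigma> x * x" using t by simp
    show "\<And>x. t \<le> x \<Longrightarrow> ((\<lambda>y. - \<sigma>\<^sup>2 * normal_density 0 \<sigma> y) has_real_derivative normal_density 0 \<sigma> x * x) (at x)"
      unfolding normal_density_def using s
      by (auto intro!: derivative_eq_intros simp: field_simps power2_eq_square)
    have "LIM y at_top. (1 / (2 * \<sigma>\<^sup>2)) * y\<^sup>2 :> at_top"
      using s by (intro filterlim_tendsto_pos_mult_at_top[OF tendsto_const] filterlim_pow_at_top filterlim_ident) auto
    then have "LIM y at_top. - ((1 / (2 * \<sigma>\<^sup>2)) * y\<^sup>2) :> at_bot"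
      by (rule filterlim_compose[OF filterlim_uminus_at_bot_at_top])
    then have "((\<lambda>y. exp (- ((1 / (2 * \<sigma>\<^sup>2)) * y\<^sup>2))) \<longlongrightarrow> 0) at_top"
      by (rule filterlim_compose[OF exp_at_bot])
    moreover have "(\<lambda>y. exp (- ((1 / (2 * \<sigma>\<^sup>2)) * y\<^sup>2))) = (\<lambda>y. exp (- (y - 0)\<^sup>2 / (2 * \<sigma>\<^sup>2)))"
      by (simp add: field_simps)
    ultimately have "((\<lambda>y. exp (- (y - 0)\<^sup>2 / (2 * \<sigma>\<^sup>2))) \<longlongrightarrow> 0) at_top" by simp
    then have "((\<lambda>y. (- \<sigma>\<^sup>2 * (1 / sqrt (2 * pi * \<sigma>\<^sup>2))) * exp (- (y - 0)\<^sup>2 / (2 * \<sigma>\<^sup>2))) \<longlongrightarrow> 0) at_top"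
      by (rule tendsto_mult_right_zero)
    then show "((\<lambda>y. - \<sigma>\<^sup>2 * normal_density 0 \<sigma> y) \<longlongrightarrow> 0) at_top"
      unfolding normal_density_def by (simp add: mult.assoc)
  qed
  finally show ?thesis by simp
qed

lemma phi_tail2:
  fixes \<sigma> t :: real
  assumes s: "\<sigma> > 0" and t: "t \<noteq> 0"
  shows "(\<integral>\<^sup>+y. ennreal (normal_density 0 \<sigma> y * \<bar>y\<bar>) * indicator {min 0 y..max 0 y} t \<partial>lborel) = ennreal (\<sigma>\<^sup>2 * normal_density 0 \<sigma> t)"
proof (cases "t > 0")
  case True
  have "(\<integral>\<^sup>+y. ennreal (normal_density 0 \<sigma> y * \<bar>y\<bar>) * indicator {min 0 y..max 0 y} t \<partial>lborel)
     = (\<integral>\<^sup>+y. ennreal (normal_density 0 \<sigma> y * \<bar>y\<bar>) * indicator {t..} y \<partial>lborel)"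
    using True by (intro nn_integral_cong) (auto split: split_indicator)
  also have "\<dots> = ennreal (\<sigma>\<^sup>2 * normal_density 0 \<sigma> t)" by (rule phi_tail[OF s True])
  finally show ?thesis .
next
  case False
  then have tn: "t < 0" using t by simp
  have "(\<integral>\<^sup>+y. ennreal (normal_density 0 \<sigma> y * \<bar>y\<bar>) * indicator {min 0 y..max 0 y} t \<partial>lborel)
     = (\<integral>\<^sup>+y. ennreal (normal_density 0 \<sigma> y * \<bar>y\<bar>) * indicator {..t} y \<partial>lborel)"
    using tn by (intro nn_integral_cong) (auto split: split_indicator)
  also have "\<dots> = ennreal \<bar>-1\<bar> * (\<integral>\<^sup>+y. ennreal (normal_density 0 \<sigma> (0 + (-1) * y) * \<bar>0 + (-1) * y\<bar>) * indicator {..t} (0 + (-1) * y) \<partial>lborel)"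
    by (rule nn_integral_real_affine) auto
  also have "\<dots> = (\<integral>\<^sup>+y. ennreal (normal_density 0 \<sigma> y * \<bar>y\<bar>) * indicator {-t..} y \<partial>lborel)"
  proof -
    have eq: "\<And>y. ennreal (normal_density 0 \<sigma> (0 + (-1) * y) * \<bar>0 + (-1) * y\<bar>) * indicator {..t} (0 + (-1) * y)
       = ennreal (normal_density 0 \<sigma> y * \<bar>y\<bar>) * indicator {-t..} y"
      by (auto simp: normal_density_def split: split_indicator)
    show ?thesis unfolding eq by simp
  qed
  also have "\<dots> = ennreal (\<sigma>\<^sup>2 * normal_density 0 \<sigma> (-t))" by (rule phi_tail[OF s]) (use tn in simp)
  also have "normal_density 0 \<sigma> (-t) = normal_density 0 \<sigma> t" by (simp add: normal_density_def)
  finally show ?thesis .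
qed

lemma poincare1:
  fixes g g' :: "real \<Rightarrow> real" and \<sigma> :: real
  assumes s: "\<sigma> > 0"
    and der: "\<And>t. (g has_real_derivative g' t) (at t)"
    and cont: "continuous_on UNIV g'"
  shows "(\<integral>\<^sup>+y. ennreal ((g y - g 0)\<^sup>2) \<partial>density lborel (normal_density 0 \<sigma>))
         \<le> ennreal (\<sigma>\<^sup>2) * (\<integral>\<^sup>+y. ennreal ((g' y)\<^sup>2) \<partial>density lborel (normal_density 0 \<sigma>))"
proof -
  let ?\<phi> = "normal_density 0 \<sigma>"
  have gc: "continuous_on UNIV g"
    using der by (intro DERIV_continuous_on) auto
  have gm[measurable]: "g \<in> borel_measurable borel"
    using gc by (simp add: borel_measurable_continuous_onI)
  have g'm[measurable]: "g' \<in> borel_measurable borel"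
    using cont by (simp add: borel_measurable_continuous_onI)
  let ?K = "\<lambda>y t. ennreal (?\<phi> y * \<bar>y\<bar>) * (ennreal ((g' t)\<^sup>2) * indicator {min 0 y..max 0 y} t)"
  have pw: "ennreal ((g y - g 0)\<^sup>2) \<le> ennreal \<bar>y\<bar> * (\<integral>\<^sup>+t. ennreal ((g' t)\<^sup>2) * indicator {min 0 y..max 0 y} t \<partial>lborel)" for y
  proof (cases "0 \<le> y")
    case True
    then show ?thesis using seg_nn[OF True der cont] by simp
  next
    case False
    then have "y \<le> 0" by simp
    from seg_nn[OF this der cont] False show ?thesis
      by (simp add: power2_commute)
  qed
  have "(\<integral>\<^sup>+y. ennreal ((g y - g 0)\<^sup>2) \<partial>density lborel ?\<phi>) = (\<integral>\<^sup>+y. ennreal (?\<phi> y) * ennreal ((g y - g 0)\<^sup>2) \<partial>lborel)"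
    by (subst nn_integral_density) auto
  also have "\<dots> \<le> (\<integral>\<^sup>+y. ennreal (?\<phi> y) * (ennreal \<bar>y\<bar> * (\<integral>\<^sup>+t. ennreal ((g' t)\<^sup>2) * indicator {min 0 y..max 0 y} t \<partial>lborel)) \<partial>lborel)"
    by (intro nn_integral_mono mult_left_mono pw) auto
  also have "\<dots> = (\<integral>\<^sup>+y. \<integral>\<^sup>+t. ?K y t \<partial>lborel \<partial>lborel)"
    by (intro nn_integral_cong) (simp add: nn_integral_cmult ennreal_mult mult.assoc)
  also have "\<dots> = (\<integral>\<^sup>+t. \<integral>\<^sup>+y. ?K y t \<partial>lborel \<partial>lborel)"
  proof (rule lborel_pair.Fubini'[symmetric])
    have "case_prod ?K = (\<lambda>p. ennreal (?\<phi> (fst p) * \<bar>fst p\<bar>) * (ennreal ((g' (snd p))\<^sup>2) *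
            (if min 0 (fst p) \<le> snd p \<and> snd p \<le> max 0 (fst p) then 1 else 0)))"
      by (auto simp: fun_eq_iff split: split_indicator)
    also have "\<dots> \<in> borel_measurable (lborel \<Otimes>\<^sub>M lborel)" by measurable
    finally show "case_prod ?K \<in> borel_measurable (lborel \<Otimes>\<^sub>M lborel)" .
  qed
  also have "\<dots> = (\<integral>\<^sup>+t. ennreal ((g' t)\<^sup>2) * (\<integral>\<^sup>+y. ennreal (?\<phi> y * \<bar>y\<bar>) * indicator {min 0 y..max 0 y} t \<partial>lborel) \<partial>lborel)"
  proof (intro nn_integral_cong)
    fix t :: real
    have m: "(\<lambda>y. ennreal (?\<phi> y * \<bar>y\<bar>) * indicator {min 0 y..max 0 y} t) \<in> borel_measurable lborel"
    proof -
      have "(\<lambda>y. ennreal (?\<phi> y * \<bar>y\<bar>) * indicator {min 0 y..max 0 y} t) =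
            (\<lambda>y. ennreal (?\<phi> y * \<bar>y\<bar>) * (if min 0 y \<le> t \<and> t \<le> max 0 y then 1 else 0))"
        by (auto simp: fun_eq_iff split: split_indicator)
      also have "\<dots> \<in> borel_measurable lborel" by measurable
      finally show ?thesis .
    qed
    show "(\<integral>\<^sup>+y. ?K y t \<partial>lborel) = ennreal ((g' t)\<^sup>2) * (\<integral>\<^sup>+y. ennreal (?\<phi> y * \<bar>y\<bar>) * indicator {min 0 y..max 0 y} t \<partial>lborel)"
      by (subst nn_integral_cmult[symmetric, OF m]) (simp add: ac_simps)
  qed
  also have "\<dots> = (\<integral>\<^sup>+t. ennreal ((g' t)\<^sup>2) * ennreal (\<sigma>\<^sup>2 * ?\<phi> t) \<partial>lborel)"
    by (intro nn_integral_cong_AE eventually_mono[OF AE_lborel_singleton[of 0]]) (simp add: phi_tail2[OF s])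
  also have "\<dots> = ennreal (\<sigma>\<^sup>2) * (\<integral>\<^sup>+t. ennreal (?\<phi> t) * ennreal ((g' t)\<^sup>2) \<partial>lborel)"
    by (subst nn_integral_cmult[symmetric]) (auto intro!: nn_integral_cong simp: ennreal_mult ac_simps)
  also have "\<dots> = ennreal (\<sigma>\<^sup>2) * (\<integral>\<^sup>+y. ennreal ((g' y)\<^sup>2) \<partial>density lborel ?\<phi>)"
    by (subst nn_integral_density) auto
  finally show ?thesis .
qed


lemma sq_int_shift:
  fixes g :: "'a \<Rightarrow> real"
  assumes Q: "finite_measure Q" and gm: "g \<in> borel_measurable Q"
    and fin: "(\<integral>\<^sup>+x. ennreal ((g x - a)\<^sup>2) \<partial>Q) < \<infinity>"
  shows "integrable Q (\<lambda>x. (g x)\<^sup>2)"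
proof -
  interpret finite_measure Q by fact
  have i1: "integrable Q (\<lambda>x. (g x - a)\<^sup>2)"
    using fin gm by (intro integrableI_nonneg) (auto simp: less_top)
  have i2: "integrable Q (\<lambda>x. 2 * (g x - a)\<^sup>2 + 2 * a\<^sup>2)"
    using i1 by auto
  show ?thesis
  proof (rule Bochner_Integration.integrable_bound[OF i2])
    show "(\<lambda>x. (g x)\<^sup>2) \<in> borel_measurable Q" using gm by measurable
    have "(g x)\<^sup>2 \<le> 2 * (g x - a)\<^sup>2 + 2 * a\<^sup>2" for x
    proof -
      have "0 \<le> (g x - 2 * a)\<^sup>2" by simp
      then show ?thesis by (simp add: power2_eq_square algebra_simps)
    qed
    then show "AE x in Q. norm ((g x)\<^sup>2) \<le> norm (2 * (g x - a)\<^sup>2 + 2 * a\<^sup>2)"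
      by (auto intro!: AE_I2)
  qed
qed

lemma var_decomp:
  fixes g :: "'a \<Rightarrow> real"
  assumes Q: "prob_space Q" and gm: "g \<in> borel_measurable Q"
  shows "(\<integral>\<^sup>+x. ennreal ((g x - c)\<^sup>2) \<partial>Q) =
         (\<integral>\<^sup>+x. ennreal ((g x - (\<integral>y. g y \<partial>Q))\<^sup>2) \<partial>Q) + ennreal (((\<integral>y. g y \<partial>Q) - c)\<^sup>2)"
proof -
  interpret prob_space Q by (rule Q)
  show ?thesis
proof (cases "integrable Q (\<lambda>x. (g x)\<^sup>2)")
  case True
  have gi: "integrable Q g"
    by (rule square_integrable_imp_integrable[OF gm True])
  define \<mu> where "\<mu> = (\<integral>y. g y \<partial>Q)"
  have i1: "integrable Q (\<lambda>x. (g x - c)\<^sup>2)" and i2: "integrable Q (\<lambda>x. (g x - \<mu>)\<^sup>2)"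
  proof -
    have "integrable Q (\<lambda>x. (g x)\<^sup>2 - 2 * a * g x + a\<^sup>2)" for a
      using True gi by (intro Bochner_Integration.integrable_add Bochner_Integration.integrable_diff
          integrable_mult_right) auto
    moreover have "(\<lambda>x. (g x)\<^sup>2 - 2 * a * g x + a\<^sup>2) = (\<lambda>x. (g x - a)\<^sup>2)" for a
      by (auto simp: fun_eq_iff power2_eq_square algebra_simps)
    ultimately have "integrable Q (\<lambda>x. (g x - a)\<^sup>2)" for a by metis
    then show "integrable Q (\<lambda>x. (g x - c)\<^sup>2)" "integrable Q (\<lambda>x. (g x - \<mu>)\<^sup>2)" by auto
  qed
  have "(\<integral>x. (g x - c)\<^sup>2 \<partial>Q) = (\<integral>x. (g x - \<mu>)\<^sup>2 + 2 * (\<mu> - c) * g x + (c\<^sup>2 - \<mu>\<^sup>2) \<partial>Q)"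
    by (intro Bochner_Integration.integral_cong) (auto simp: power2_eq_square algebra_simps)
  also have "\<dots> = (\<integral>x. (g x - \<mu>)\<^sup>2 \<partial>Q) + 2 * (\<mu> - c) * \<mu> + (c\<^sup>2 - \<mu>\<^sup>2)"
    using i2 gi by (simp add: \<mu>_def prob_space)
  also have "\<dots> = (\<integral>x. (g x - \<mu>)\<^sup>2 \<partial>Q) + (\<mu> - c)\<^sup>2"
    by (simp add: power2_eq_square algebra_simps)
  finally have eq: "(\<integral>x. (g x - c)\<^sup>2 \<partial>Q) = (\<integral>x. (g x - \<mu>)\<^sup>2 \<partial>Q) + (\<mu> - c)\<^sup>2" .
  have "(\<integral>\<^sup>+x. ennreal ((g x - c)\<^sup>2) \<partial>Q) = ennreal (\<integral>x. (g x - c)\<^sup>2 \<partial>Q)"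
    using i1 by (rule nn_integral_eq_integral) simp
  also have "\<dots> = ennreal (\<integral>x. (g x - \<mu>)\<^sup>2 \<partial>Q) + ennreal ((\<mu> - c)\<^sup>2)"
    unfolding eq by (rule ennreal_plus) (simp_all add: integral_nonneg_AE)
  also have "ennreal (\<integral>x. (g x - \<mu>)\<^sup>2 \<partial>Q) = (\<integral>\<^sup>+x. ennreal ((g x - \<mu>)\<^sup>2) \<partial>Q)"
    using i2 by (rule nn_integral_eq_integral[symmetric]) simp
  finally show ?thesis unfolding \<mu>_def .
next
  case False
  have inf: "(\<integral>\<^sup>+x. ennreal ((g x - a)\<^sup>2) \<partial>Q) = \<infinity>" for a
  proof -
    have "\<not> ((\<integral>\<^sup>+x. ennreal ((g x - a)\<^sup>2) \<partial>Q) < \<infinity>)"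
      using sq_int_shift[OF finite_measure_axioms gm, of a] False by blast
    then show ?thesis by (simp add: less_top[symmetric])
  qed
  show ?thesis by (simp add: inf)
qed
qed

lemma dev_le:
  fixes g :: "'a \<Rightarrow> real"
  assumes Q: "prob_space Q" and gm: "g \<in> borel_measurable Q"
  shows "(\<integral>\<^sup>+x. ennreal ((g x - (\<integral>y. g y \<partial>Q))\<^sup>2) \<partial>Q) \<le> (\<integral>\<^sup>+x. ennreal ((g x - c)\<^sup>2) \<partial>Q)"
  by (subst var_decomp[OF Q gm, of c]) simp

lemma jensen_sq:
  fixes g :: "'a \<Rightarrow> real"
  assumes Q: "prob_space Q" and gm: "g \<in> borel_measurable Q"
  shows "ennreal ((\<integral>y. g y \<partial>Q)\<^sup>2) \<le> (\<integral>\<^sup>+x. ennreal ((g x)\<^sup>2) \<partial>Q)"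
  using var_decomp[OF Q gm, of 0] by simp


definition wt :: "'i set \<Rightarrow> ('i \<Rightarrow> real) \<Rightarrow> real" where
  "wt J x = (\<Prod>j\<in>J. 1 + (x j)^4)"

definition Ej :: "real measure \<Rightarrow> 'i \<Rightarrow> (('i \<Rightarrow> real) \<Rightarrow> real) \<Rightarrow> ('i \<Rightarrow> real) \<Rightarrow> real" where
  "Ej N j F x = (\<integral>u. F (x(j := u)) \<partial>N)"

definition polyb :: "real measure \<Rightarrow> 'i set \<Rightarrow> real \<Rightarrow> (('i \<Rightarrow> real) \<Rightarrow> real) \<Rightarrow> bool" where
  "polyb N J C F \<longleftrightarrow> F \<in> borel_measurable (PiM J (\<lambda>_. N)) \<and>
     (\<forall>x\<in>space (PiM J (\<lambda>_. N)). \<bar>F x\<bar> \<le> C * wt J x)"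

lemma wt_ge1: "finite J \<Longrightarrow> 1 \<le> wt J x"
  unfolding wt_def by (intro prod_ge_1) auto

lemma wt_pos: "finite J \<Longrightarrow> 0 < wt J x"
  using wt_ge1[of J x] by simp

lemma wt_upd: "finite J \<Longrightarrow> wt (insert i J) (x(i := y)) = (1 + y^4) * wt (J - {i}) x"
  unfolding wt_def by (subst prod.insert_remove) (auto intro!: prod.cong)

lemma wt_mono: "finite J \<Longrightarrow> I \<subseteq> J \<Longrightarrow> wt I x \<le> wt J x"
  unfolding wt_def by (intro prod_mono2) auto

locale gprod =
  fixes N :: "real measure"
  assumes prob: "prob_space N" and sets_N: "sets N = sets borel" and space_N: "space N = UNIV"
    and int_w2: "integrable N (\<lambda>t. (1 + t^4)^2)"
begin

lemma meas_N[measurable_cong]: "sets N = sets borel" by (rule sets_N)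

interpretation N: prob_space N by (rule prob)

lemma int_w: "integrable N (\<lambda>t. 1 + t^4)"
proof (rule Bochner_Integration.integrable_bound[OF int_w2])
  show "(\<lambda>t. 1 + t^4) \<in> borel_measurable N" by (simp add: measurable_cong_sets[OF sets_N refl])
  show "AE x in N. norm (1 + x^4) \<le> norm ((1 + x^4)^2)"
  proof (intro AE_I2)
    fix x :: real
    have a: "0 \<le> x^4" by simp
    have "1 + x^4 \<le> (1 + x^4) * (1 + x^4)" using a by (simp add: algebra_simps)
    moreover have "norm (1 + x^4) = 1 + x^4" using a by simp
    moreover have "norm ((1 + x^4)^2) = (1 + x^4) * (1 + x^4)" using a by (simp add: power2_eq_square)
    ultimately show "norm (1 + x^4) \<le> norm ((1 + x^4)^2)" by linarith
  qed
qed

definition sw :: real where "sw = (\<integral>t. 1 + t^4 \<partial>N)"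

lemma sw_ge1: "1 \<le> sw"
proof -
  have "(\<integral>t. 1 \<partial>N) \<le> sw" unfolding sw_def
    using int_w by (intro integral_mono) auto
  then show ?thesis by (simp add: N.prob_space)
qed

lemma prodPS: "product_prob_space (\<lambda>_. N)"
  by (simp add: product_prob_space_def product_prob_space_axioms_def product_sigma_finite_def
      prob N.sigma_finite_measure_axioms)

lemma prodSF: "product_sigma_finite (\<lambda>_. N)"
  by (simp add: product_sigma_finite_def N.sigma_finite_measure_axioms)

lemma probP: "prob_space (PiM J (\<lambda>_. N))"
  by (intro prob_space_PiM prob)

lemma space_P: "space (PiM J (\<lambda>_. N)) = extensional J"
  by (simp add: space_PiM space_N PiE_def)

lemma upd_space: "x \<in> space (PiM J (\<lambda>_. N)) \<Longrightarrow> x(i := y) \<in> space (PiM (insert i J) (\<lambda>_. N))"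
  by (auto simp: space_P extensional_def)

lemma wt_meas[measurable]: "finite J \<Longrightarrow> wt J \<in> borel_measurable (PiM J (\<lambda>_. N))"
  unfolding wt_def by measurable

lemma int_wt: "finite J \<Longrightarrow> integrable (PiM J (\<lambda>_. N)) (wt J)"
  unfolding wt_def
  by (rule product_sigma_finite.product_integrable_prod[OF prodSF]) (auto intro: int_w)

lemma int_wt2: "finite J \<Longrightarrow> integrable (PiM J (\<lambda>_. N)) (\<lambda>x. (wt J x)^2)"
proof -
  assume J: "finite J"
  have "integrable (PiM J (\<lambda>_. N)) (\<lambda>x. \<Prod>j\<in>J. (1 + (x j)^4)^2)"
    by (rule product_sigma_finite.product_integrable_prod[OF prodSF]) (auto intro: int_w2 J)
  moreover have "(\<lambda>x. \<Prod>j\<in>J. (1 + (x j)^4)^2) = (\<lambda>x. (wt J x)^2)"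
    unfolding wt_def by (simp add: prod_power_distrib)
  ultimately show ?thesis by simp
qed

lemma upd_meas:
  assumes F: "F \<in> borel_measurable (PiM (insert j K) (\<lambda>_. N))"
  shows "(\<lambda>(x, u). F (x(j := u))) \<in> borel_measurable (PiM K (\<lambda>_. N) \<Otimes>\<^sub>M N)"
proof -
  have "(\<lambda>(x, u). x(j := u)) \<in> measurable (PiM K (\<lambda>_. N) \<Otimes>\<^sub>M N) (PiM (insert j K) (\<lambda>_. N))"
    using measurable_add_dim[of j K "\<lambda>_. N"] by simp
  from measurable_comp[OF this F] show ?thesis by (simp add: comp_def case_prod_beta')
qed

lemma upd_meas1:
  assumes F: "F \<in> borel_measurable (PiM (insert j K) (\<lambda>_. N))" and x: "x \<in> space (PiM K (\<lambda>_. N))"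
  shows "(\<lambda>u. F (x(j := u))) \<in> borel_measurable N"
proof -
  have "(\<lambda>u. x(j := u)) \<in> measurable N (PiM (insert j K) (\<lambda>_. N))"
    using x by (intro measurable_fun_upd[where J=K]) auto
  from measurable_comp[OF this F] show ?thesis by (simp add: comp_def)
qed

lemma polyb_int:
  assumes J: "finite J" and F: "polyb N J C F"
  shows "integrable (PiM J (\<lambda>_. N)) F" "integrable (PiM J (\<lambda>_. N)) (\<lambda>x. (F x)^2)"
proof -
  have Fm: "F \<in> borel_measurable (PiM J (\<lambda>_. N))" and Fb: "\<And>x. x \<in> space (PiM J (\<lambda>_. N)) \<Longrightarrow> \<bar>F x\<bar> \<le> C * wt J x"
    using F by (auto simp: polyb_def)
  show "integrable (PiM J (\<lambda>_. N)) F"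
  proof (rule Bochner_Integration.integrable_bound[of _ "\<lambda>x. C * wt J x"])
    show "integrable (PiM J (\<lambda>_. N)) (\<lambda>x. C * wt J x)" using int_wt[OF J] by simp
    show "AE x in PiM J (\<lambda>_. N). norm (F x) \<le> norm (C * wt J x)"
      using Fb by (intro AE_I2) (force intro: order_trans[OF _ abs_ge_self])
  qed (rule Fm)
  show "integrable (PiM J (\<lambda>_. N)) (\<lambda>x. (F x)^2)"
  proof (rule Bochner_Integration.integrable_bound[of _ "\<lambda>x. C^2 * (wt J x)^2"])
    show "integrable (PiM J (\<lambda>_. N)) (\<lambda>x. C^2 * (wt J x)^2)" using int_wt2[OF J] by simp
    show "AE x in PiM J (\<lambda>_. N). norm ((F x)^2) \<le> norm (C^2 * (wt J x)^2)"
    proof (intro AE_I2)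
      fix x assume x: "x \<in> space (PiM J (\<lambda>_. N))"
      have "\<bar>F x\<bar>^2 \<le> (C * wt J x)^2"
        using Fb[OF x] by (intro power_mono) auto
      then show "norm ((F x)^2) \<le> norm (C^2 * (wt J x)^2)"
        by (simp add: power_mult_distrib)
    qed
    show "(\<lambda>x. (F x)^2) \<in> borel_measurable (PiM J (\<lambda>_. N))" using Fm by measurable
  qed
qed

lemma polyb_sec:
  assumes K: "finite K" and F: "polyb N (insert j K) C F" and x: "x \<in> space (PiM K (\<lambda>_. N))"
  shows "\<bar>F (x(j := u))\<bar> \<le> C * (1 + u^4) * wt K x"
    and "integrable N (\<lambda>u. F (x(j := u)))"
proof -
  have Fm: "F \<in> borel_measurable (PiM (insert j K) (\<lambda>_. N))" and Fb: "\<And>x. x \<in> space (PiM (insert j K) (\<lambda>_. N)) \<Longrightarrow> \<bar>F x\<bar> \<le> C * wt (insert j K) x"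
    using F by (auto simp: polyb_def)
  have C: "0 \<le> C"
  proof -
    have "\<bar>F (x(j := 0))\<bar> \<le> C * wt (insert j K) (x(j := 0))" by (rule Fb[OF upd_space[OF x]])
    moreover have "0 < wt (insert j K) (x(j := 0))" using K by (intro wt_pos) auto
    ultimately show ?thesis by (smt (verit) mult_neg_pos)
  qed
  have b: "\<bar>F (x(j := u))\<bar> \<le> C * (1 + u^4) * wt K x" for u
  proof -
    have "\<bar>F (x(j := u))\<bar> \<le> C * wt (insert j K) (x(j := u))" by (rule Fb[OF upd_space[OF x]])
    also have "wt (insert j K) (x(j := u)) = (1 + u^4) * wt (K - {j}) x" using K by (intro wt_upd) auto
    also have "C * ((1 + u^4) * wt (K - {j}) x) \<le> C * ((1 + u^4) * wt K x)"
      using C K by (intro mult_left_mono wt_mono) auto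
    finally show ?thesis by (simp only: mult.assoc)
  qed
  then show "\<bar>F (x(j := u))\<bar> \<le> C * (1 + u^4) * wt K x" .
  show "integrable N (\<lambda>u. F (x(j := u)))"
  proof (rule Bochner_Integration.integrable_bound[of _ "\<lambda>u. C * wt K x * (1 + u^4)"])
    show "integrable N (\<lambda>u. C * wt K x * (1 + u^4))" using int_w by simp
    show "(\<lambda>u. F (x(j := u))) \<in> borel_measurable N" by (rule upd_meas1[OF Fm x])
    show "AE u in N. norm (F (x(j := u))) \<le> norm (C * wt K x * (1 + u^4))"
    proof (intro AE_I2)
      fix u :: real
      have "0 \<le> C * wt K x * (1 + u^4)" using C wt_pos[OF K, of x] by simp
      moreover have "C * wt K x * (1 + u^4) = C * (1 + u^4) * wt K x" by (simp add: ac_simps)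
      ultimately show "norm (F (x(j := u))) \<le> norm (C * wt K x * (1 + u^4))"
        using b[of u] by (simp only: real_norm_def)
    qed
  qed
qed

lemma polyb_Ej:
  assumes K: "finite K" and F: "polyb N (insert j K) C F"
  shows "polyb N K (C * sw) (Ej N j F)"
  unfolding polyb_def
proof safe
  have Fm: "F \<in> borel_measurable (PiM (insert j K) (\<lambda>_. N))"
    using F by (auto simp: polyb_def)
  show "Ej N j F \<in> borel_measurable (PiM K (\<lambda>_. N))"
    unfolding Ej_def
    by (rule N.borel_measurable_lebesgue_integral) (use upd_meas[OF Fm] in simp)
  fix x assume x: "x \<in> space (PiM K (\<lambda>_. N))"
  note sec = polyb_sec[OF K F x]
  have "\<bar>Ej N j F x\<bar> \<le> (\<integral>u. \<bar>F (x(j := u))\<bar> \<partial>N)"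
    unfolding Ej_def by (rule integral_abs_bound)
  also have "\<dots> \<le> (\<integral>u. C * wt K x * (1 + u^4) \<partial>N)"
    using sec(1) int_w sec(2) by (intro integral_mono) (auto simp: ac_simps)
  also have "\<dots> = C * sw * wt K x"
    by (simp add: sw_def)
  finally show "\<bar>Ej N j F x\<bar> \<le> C * sw * wt K x" .
qed

lemma int_ww: "integrable (N \<Otimes>\<^sub>M N) (\<lambda>(u, y). (1 + u^4) * (1 + y^4))"
proof (subst integrable_iff_bounded, safe)
  show "(\<lambda>(u, y). (1 + u^4) * (1 + y^4)) \<in> borel_measurable (N \<Otimes>\<^sub>M N)"
    by (simp add: measurable_cong_sets[OF sets_pair_measure_cong[OF sets_N sets_N] refl])
  have m: "(\<lambda>p. ennreal (norm (case p of (u, y) \<Rightarrow> (1 + u^4) * (1 + y^4)))) \<in> borel_measurable (N \<Otimes>\<^sub>M N)"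
    by (simp add: measurable_cong_sets[OF sets_pair_measure_cong[OF sets_N sets_N] refl])
  have "(\<integral>\<^sup>+p. ennreal (norm (case p of (u, y) \<Rightarrow> (1 + u^4) * (1 + y^4))) \<partial>(N \<Otimes>\<^sub>M N))
     = (\<integral>\<^sup>+u. \<integral>\<^sup>+y. ennreal (1 + u^4) * ennreal (1 + y^4) \<partial>N \<partial>N)"
    by (subst N.nn_integral_fst[OF m, symmetric]) (auto intro!: nn_integral_cong simp: ennreal_mult abs_mult)
  also have "\<dots> = (\<integral>\<^sup>+u. ennreal (1 + u^4) \<partial>N) * (\<integral>\<^sup>+y. ennreal (1 + y^4) \<partial>N)"
    by (simp add: nn_integral_cmult nn_integral_multc measurable_cong_sets[OF sets_N refl])
  also have "\<dots> < \<infinity>"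
  proof -
    have "(\<integral>\<^sup>+u. ennreal (1 + u^4) \<partial>N) < \<infinity>"
      using int_w by (simp add: integrable_iff_bounded)
    then show ?thesis by (simp add: ennreal_mult_less_top)
  qed
  finally show "(\<integral>\<^sup>+p. ennreal (norm (case p of (u, y) \<Rightarrow> (1 + u^4) * (1 + y^4))) \<partial>(N \<Otimes>\<^sub>M N)) < \<infinity>" .
qed

lemma swap_Ej:
  assumes J: "finite J" "i \<notin> J" "j \<in> J" and F: "polyb N (insert i J) C F"
    and x: "x \<in> space (PiM J (\<lambda>_. N))"
  shows "Ej N j (Ej N i F) x = (\<integral>y. Ej N j F (x(i := y)) \<partial>N)"
proof -
  interpret NN: pair_sigma_finite N N
    by (simp add: pair_sigma_finite_def N.sigma_finite_measure_axioms)
  have Fm: "F \<in> borel_measurable (PiM (insert i J) (\<lambda>_. N))" and Fb: "\<And>x. x \<in> space (PiM (insert i J) (\<lambda>_. N)) \<Longrightarrow> \<bar>F x\<bar> \<le> C * wt (insert i J) x"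
    using F by (auto simp: polyb_def)
  have ij: "i \<noteq> j" using J by auto
  define f where "f u y = F (x(j := u, i := y))" for u y
  have fm: "case_prod f \<in> borel_measurable (N \<Otimes>\<^sub>M N)"
  proof -
    have "(\<lambda>p. x(j := fst p, i := snd p)) \<in> measurable (N \<Otimes>\<^sub>M N) (PiM (insert i J) (\<lambda>_. N))"
    proof (rule measurable_fun_upd[where J=J])
      show "(\<lambda>p. x(j := fst p)) \<in> measurable (N \<Otimes>\<^sub>M N) (PiM J (\<lambda>_. N))"
        using x J by (intro measurable_fun_upd[where J=J]) (auto simp: insert_absorb)
    qed auto
    from measurable_comp[OF this Fm] show ?thesis by (simp add: f_def comp_def case_prod_beta')
  qed
  have xj: "x(j := u) \<in> space (PiM J (\<lambda>_. N))" for u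
    using upd_space[OF x, of j u] J by (simp add: insert_absorb)
  have C: "0 \<le> C"
  proof -
    have "\<bar>F (x(i := 0))\<bar> \<le> C * wt (insert i J) (x(i := 0))" by (rule Fb[OF upd_space[OF x]])
    moreover have "0 < wt (insert i J) (x(i := 0))" using J by (intro wt_pos) auto
    ultimately show ?thesis by (smt (verit) mult_neg_pos)
  qed
  have fb: "\<bar>f u y\<bar> \<le> C * wt (J - {j}) x * ((1 + u^4) * (1 + y^4))" for u y
  proof -
    have "\<bar>f u y\<bar> \<le> C * (1 + y^4) * wt J (x(j := u))"
      unfolding f_def by (rule polyb_sec(1)[OF J(1) F xj])
    also have "wt J (x(j := u)) = (1 + u^4) * wt (J - {j}) x"
      using wt_upd[OF J(1), of j x u] J by (simp add: insert_absorb)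
    finally show ?thesis by (simp add: ac_simps)
  qed
  have fi: "integrable (N \<Otimes>\<^sub>M N) (case_prod f)"
  proof (rule Bochner_Integration.integrable_bound[OF _ fm])
    show "integrable (N \<Otimes>\<^sub>M N) (\<lambda>p. C * wt (J - {j}) x * (case p of (u, y) \<Rightarrow> (1 + u^4) * (1 + y^4)))"
      using int_ww by simp
    show "AE p in N \<Otimes>\<^sub>M N. norm (case_prod f p) \<le> norm (C * wt (J - {j}) x * (case p of (u, y) \<Rightarrow> (1 + u^4) * (1 + y^4)))"
    proof (intro AE_I2)
      fix p :: "real \<times> real"
      obtain u y where p: "p = (u, y)" by (cases p)
      have "0 \<le> C * wt (J - {j}) x * ((1 + u^4) * (1 + y^4))"
        using C wt_pos[of "J - {j}" x] J by simp
      then show "norm (case_prod f p) \<le> norm (C * wt (J - {j}) x * (case p of (u, y) \<Rightarrow> (1 + u^4) * (1 + y^4)))"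
        using fb[of u y] unfolding p by (simp only: real_norm_def prod.case)
    qed
  qed
  have "Ej N j (Ej N i F) x = (\<integral>u. \<integral>y. f u y \<partial>N \<partial>N)"
    unfolding Ej_def f_def ..
  also have "\<dots> = (\<integral>y. \<integral>u. f u y \<partial>N \<partial>N)"
    by (rule NN.Fubini_integral[OF fi, symmetric])
  also have "\<dots> = (\<integral>y. Ej N j F (x(i := y)) \<partial>N)"
    unfolding Ej_def f_def using ij by (simp add: fun_upd_twist)
  finally show ?thesis .
qed

end


context gprod begin

interpretation N: prob_space N by (rule prob)

lemma ES_step_j:
  assumes J: "finite J" "i \<notin> J" "j \<in> J" and F: "polyb N (insert i J) C F"
  shows "(\<integral>\<^sup>+x. ennreal ((Ej N i F x - Ej N j (Ej N i F) x)\<^sup>2) \<partial>PiM J (\<lambda>_. N))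
         \<le> (\<integral>\<^sup>+z. ennreal ((F z - Ej N j F z)\<^sup>2) \<partial>PiM (insert i J) (\<lambda>_. N))"
proof -
  have Fm: "F \<in> borel_measurable (PiM (insert i J) (\<lambda>_. N))"
    using F by (auto simp: polyb_def)
  have F': "polyb N (insert j (insert i J)) C F" using F J by (simp add: insert_absorb insert_commute)
  have EjF: "polyb N (insert i J) (C * sw) (Ej N j F)"
    by (rule polyb_Ej[OF _ F']) (use J in simp)
  have EjFm: "Ej N j F \<in> borel_measurable (PiM (insert i J) (\<lambda>_. N))"
    using EjF by (simp add: polyb_def)
  have "(\<integral>\<^sup>+z. ennreal ((F z - Ej N j F z)\<^sup>2) \<partial>PiM (insert i J) (\<lambda>_. N))
      = (\<integral>\<^sup>+x. \<integral>\<^sup>+y. ennreal ((F (x(i := y)) - Ej N j F (x(i := y)))\<^sup>2) \<partial>N \<partial>PiM J (\<lambda>_. N))"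
  proof -
    have "(\<lambda>z. ennreal ((F z - Ej N j F z)\<^sup>2)) \<in> borel_measurable (PiM (insert i J) (\<lambda>_. N))"
      using Fm EjFm by measurable
    then show ?thesis
      using J by (subst product_sigma_finite.product_nn_integral_insert[OF prodSF]) auto
  qed
  also have "\<dots> \<ge> (\<integral>\<^sup>+x. ennreal ((Ej N i F x - Ej N j (Ej N i F) x)\<^sup>2) \<partial>PiM J (\<lambda>_. N))"
  proof (intro nn_integral_mono)
    fix x assume x: "x \<in> space (PiM J (\<lambda>_. N))"
    have i1: "integrable N (\<lambda>y. F (x(i := y)))" by (rule polyb_sec(2)[OF J(1) F x])
    have i2: "integrable N (\<lambda>y. Ej N j F (x(i := y)))" by (rule polyb_sec(2)[OF J(1) EjF x])
    have "Ej N i F x - Ej N j (Ej N i F) x = (\<integral>y. F (x(i := y)) \<partial>N) - (\<integral>y. Ej N j F (x(i := y)) \<partial>N)"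
    proof -
      have a: "Ej N j (Ej N i F) x = (\<integral>y. Ej N j F (x(i := y)) \<partial>N)" by (rule swap_Ej[OF J F x])
      have b: "Ej N i F x = (\<integral>y. F (x(i := y)) \<partial>N)" by (simp add: Ej_def)
      show ?thesis unfolding a b ..
    qed
    also have "\<dots> = (\<integral>y. F (x(i := y)) - Ej N j F (x(i := y)) \<partial>N)"
      using i1 i2 by simp
    finally have eq: "Ej N i F x - Ej N j (Ej N i F) x = (\<integral>y. F (x(i := y)) - Ej N j F (x(i := y)) \<partial>N)" .
    have hm: "(\<lambda>y. F (x(i := y)) - Ej N j F (x(i := y))) \<in> borel_measurable N"
      using upd_meas1[OF Fm x] upd_meas1[OF EjFm x] by measurable
    show "ennreal ((Ej N i F x - Ej N j (Ej N i F) x)\<^sup>2) \<le> (\<integral>\<^sup>+y. ennreal ((F (x(i := y)) - Ej N j F (x(i := y)))\<^sup>2) \<partial>N)"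
      unfolding eq by (rule jensen_sq[OF prob hm])
  qed
  finally show ?thesis .
qed

theorem efron_stein:
  assumes J: "finite J" and F: "polyb N J C F"
  shows "(\<integral>\<^sup>+x. ennreal ((F x - (\<integral>z. F z \<partial>PiM J (\<lambda>_. N)))\<^sup>2) \<partial>PiM J (\<lambda>_. N))
         \<le> (\<Sum>j\<in>J. \<integral>\<^sup>+x. ennreal ((F x - Ej N j F x)\<^sup>2) \<partial>PiM J (\<lambda>_. N))"
  using J F
proof (induction J arbitrary: C F rule: finite_induct)
  case empty
  show ?case
    by (simp add: PiM_empty nn_integral_count_space_finite lebesgue_integral_count_space_finite)
next
  case (insert i J)
  note J = insert(1,2)
  note F = insert(4)
  let ?P = "PiM J (\<lambda>_. N)" and ?P' = "PiM (insert i J) (\<lambda>_. N)"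
  have Fm: "F \<in> borel_measurable ?P'"
    using F by (auto simp: polyb_def)
  define m where "m = Ej N i F"
  have mp: "polyb N J (C * sw) m" unfolding m_def by (rule polyb_Ej[OF J(1) F])
  have mm: "m \<in> borel_measurable ?P" using mp by (simp add: polyb_def)
  have Fi: "integrable ?P' F" by (rule polyb_int(1)[OF _ F]) (use J in simp)
  define \<mu> where "\<mu> = (\<integral>z. F z \<partial>?P')"
  have mu: "\<mu> = (\<integral>x. m x \<partial>?P)"
    unfolding \<mu>_def m_def Ej_def
    by (rule product_sigma_finite.product_integral_insert[OF prodSF J Fi])
  have "(\<integral>\<^sup>+z. ennreal ((F z - \<mu>)\<^sup>2) \<partial>?P') = (\<integral>\<^sup>+x. \<integral>\<^sup>+y. ennreal ((F (x(i := y)) - \<mu>)\<^sup>2) \<partial>N \<partial>?P)"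
  proof -
    have "(\<lambda>z. ennreal ((F z - \<mu>)\<^sup>2)) \<in> borel_measurable ?P'"
      using Fm by measurable
    then show ?thesis
      using J by (subst product_sigma_finite.product_nn_integral_insert[OF prodSF]) auto
  qed
  also have "\<dots> = (\<integral>\<^sup>+x. (\<integral>\<^sup>+y. ennreal ((F (x(i := y)) - m x)\<^sup>2) \<partial>N) + ennreal ((m x - \<mu>)\<^sup>2) \<partial>?P)"
  proof (intro nn_integral_cong)
    fix x assume x: "x \<in> space ?P"
    show "(\<integral>\<^sup>+y. ennreal ((F (x(i := y)) - \<mu>)\<^sup>2) \<partial>N) = (\<integral>\<^sup>+y. ennreal ((F (x(i := y)) - m x)\<^sup>2) \<partial>N) + ennreal ((m x - \<mu>)\<^sup>2)"
      unfolding m_def Ej_def by (rule var_decomp[OF prob upd_meas1[OF Fm x]])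
  qed
  also have "\<dots> = (\<integral>\<^sup>+x. \<integral>\<^sup>+y. ennreal ((F (x(i := y)) - m x)\<^sup>2) \<partial>N \<partial>?P) + (\<integral>\<^sup>+x. ennreal ((m x - \<mu>)\<^sup>2) \<partial>?P)"
  proof (rule nn_integral_add)
    have "(\<lambda>(x, y). F (x(i := y))) \<in> borel_measurable (?P \<Otimes>\<^sub>M N)" by (rule upd_meas[OF Fm])
    then have "(\<lambda>(x, y). ennreal ((F (x(i := y)) - m x)\<^sup>2)) \<in> borel_measurable (?P \<Otimes>\<^sub>M N)"
      using mm by measurable
    then show "(\<lambda>x. \<integral>\<^sup>+y. ennreal ((F (x(i := y)) - m x)\<^sup>2) \<partial>N) \<in> borel_measurable ?P"
      by (rule N.borel_measurable_nn_integral)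
    show "(\<lambda>x. ennreal ((m x - \<mu>)\<^sup>2)) \<in> borel_measurable ?P" using mm by measurable
  qed
  also have "(\<integral>\<^sup>+x. \<integral>\<^sup>+y. ennreal ((F (x(i := y)) - m x)\<^sup>2) \<partial>N \<partial>?P) = (\<integral>\<^sup>+z. ennreal ((F z - Ej N i F z)\<^sup>2) \<partial>?P')"
  proof -
    have EiFm: "Ej N i F \<in> borel_measurable ?P'"
      using polyb_Ej[of "insert i J" i C F] F J by (simp add: polyb_def)
    have "(\<integral>\<^sup>+z. ennreal ((F z - Ej N i F z)\<^sup>2) \<partial>?P') = (\<integral>\<^sup>+x. \<integral>\<^sup>+y. ennreal ((F (x(i := y)) - Ej N i F (x(i := y)))\<^sup>2) \<partial>N \<partial>?P)"
    proof -
      have "(\<lambda>z. ennreal ((F z - Ej N i F z)\<^sup>2)) \<in> borel_measurable ?P'"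
        using Fm EiFm by measurable
      then show ?thesis
        using J by (subst product_sigma_finite.product_nn_integral_insert[OF prodSF]) auto
    qed
    also have "\<dots> = (\<integral>\<^sup>+x. \<integral>\<^sup>+y. ennreal ((F (x(i := y)) - m x)\<^sup>2) \<partial>N \<partial>?P)"
      by (simp add: m_def Ej_def)
    finally show ?thesis by simp
  qed
  also have "(\<integral>\<^sup>+x. ennreal ((m x - \<mu>)\<^sup>2) \<partial>?P) \<le> (\<Sum>j\<in>J. \<integral>\<^sup>+x. ennreal ((m x - Ej N j m x)\<^sup>2) \<partial>?P)"
    unfolding mu by (rule insert.IH[OF mp])
  also have "\<dots> \<le> (\<Sum>j\<in>J. \<integral>\<^sup>+z. ennreal ((F z - Ej N j F z)\<^sup>2) \<partial>?P')"
    unfolding m_def by (intro sum_mono) (rule ES_step_j[OF J(1) J(2) _ F])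
  finally show ?case
    using J by (simp add: \<mu>_def add_mono)
qed

end


lemma normal_mom_int: assumes s: "\<sigma> > 0" shows
  "integrable (density lborel (normal_density 0 \<sigma>)) (\<lambda>x::real. x ^ k)"
proof (subst integrable_density)
  show "integrable lborel (\<lambda>x. normal_density 0 \<sigma> x *\<^sub>R x ^ k)"
    using integrable_normal_moment[where \<mu>=0 and \<sigma>=\<sigma> and k=k] s by simp
qed auto

lemma gprod_normal: assumes s: "\<sigma> > 0" shows "gprod (density lborel (normal_density 0 \<sigma>))"
proof (rule gprod.intro)
  show "prob_space (density lborel (normal_density 0 \<sigma>))" by (rule prob_space_normal_density[OF s])
  show "sets (density lborel (normal_density 0 \<sigma>)) = sets borel" by simp
  show "space (density lborel (normal_density 0 \<sigma>)) = UNIV" by simp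
  have "integrable (density lborel (normal_density 0 \<sigma>)) (\<lambda>t. 1 + 2 * t^4 + t^8)"
    using normal_mom_int[OF s, of 4] normal_mom_int[OF s, of 8]
      finite_measure.integrable_const[OF prob_space.finite_measure[OF prob_space_normal_density[where \<mu>=0, OF s]]]
    by (auto intro!: Bochner_Integration.integrable_add)
  moreover have "(\<lambda>t::real. 1 + 2 * t^4 + t^8) = (\<lambda>t. (1 + t^4)^2)"
    by (auto simp: fun_eq_iff power2_eq_square algebra_simps power_add[symmetric])
  ultimately show "integrable (density lborel (normal_density 0 \<sigma>)) (\<lambda>t. (1 + t^4)^2)" by simp
qed

locale gnorm =
  fixes \<sigma> :: real
  assumes s: "\<sigma> > 0"
begin

abbreviation "N \<equiv> density lborel (normal_density 0 \<sigma>)"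

sublocale gprod N by (rule gprod_normal[OF s])

interpretation N: prob_space N by (rule prob)

theorem tensor_poincare:
  assumes J: "finite J" and F: "polyb N J C F"
    and der: "\<And>j x t. j \<in> J \<Longrightarrow> x \<in> space (PiM J (\<lambda>_. N)) \<Longrightarrow>
                 ((\<lambda>u. F (x(j := u))) has_real_derivative D j (x(j := t))) (at t)"
    and cont: "\<And>j x. j \<in> J \<Longrightarrow> x \<in> space (PiM J (\<lambda>_. N)) \<Longrightarrow> continuous_on UNIV (\<lambda>u. D j (x(j := u)))"
    and Dm: "\<And>j. j \<in> J \<Longrightarrow> D j \<in> borel_measurable (PiM J (\<lambda>_. N))"
  shows "(\<integral>\<^sup>+x. ennreal ((F x - (\<integral>z. F z \<partial>PiM J (\<lambda>_. N)))\<^sup>2) \<partial>PiM J (\<lambda>_. N))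
         \<le> ennreal (\<sigma>\<^sup>2) * (\<integral>\<^sup>+x. ennreal (\<Sum>j\<in>J. (D j x)\<^sup>2) \<partial>PiM J (\<lambda>_. N))"
proof -
  have Fm: "F \<in> borel_measurable (PiM J (\<lambda>_. N))" using F by (simp add: polyb_def)
  have one: "(\<integral>\<^sup>+x. ennreal ((F x - Ej N j F x)\<^sup>2) \<partial>PiM J (\<lambda>_. N))
        \<le> ennreal (\<sigma>\<^sup>2) * (\<integral>\<^sup>+x. ennreal ((D j x)\<^sup>2) \<partial>PiM J (\<lambda>_. N))" if j: "j \<in> J" for j
  proof -
    define K where "K = J - {j}"
    have JK: "J = insert j K" "j \<notin> K" "finite K" using j J by (auto simp: K_def)
    have F': "polyb N (insert j J) C F" using F j by (simp add: insert_absorb)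
    have EjFm: "Ej N j F \<in> borel_measurable (PiM J (\<lambda>_. N))"
      using polyb_Ej[OF J F'] by (simp add: polyb_def)
    have m1: "(\<lambda>z. ennreal ((F z - Ej N j F z)\<^sup>2)) \<in> borel_measurable (PiM (insert j K) (\<lambda>_. N))"
      using Fm EjFm JK(1) by simp
    have m2: "(\<lambda>z. ennreal ((D j z)\<^sup>2)) \<in> borel_measurable (PiM (insert j K) (\<lambda>_. N))"
      using Dm[OF j] JK(1) by simp
    have "(\<integral>\<^sup>+x. ennreal ((F x - Ej N j F x)\<^sup>2) \<partial>PiM J (\<lambda>_. N))
       = (\<integral>\<^sup>+x. \<integral>\<^sup>+y. ennreal ((F (x(j := y)) - Ej N j F (x(j := y)))\<^sup>2) \<partial>N \<partial>PiM K (\<lambda>_. N))"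
      unfolding JK(1) by (rule product_sigma_finite.product_nn_integral_insert[OF prodSF JK(3) JK(2) m1])
    also have "\<dots> \<le> (\<integral>\<^sup>+x. ennreal (\<sigma>\<^sup>2) * \<integral>\<^sup>+y. ennreal ((D j (x(j := y)))\<^sup>2) \<partial>N \<partial>PiM K (\<lambda>_. N))"
    proof (intro nn_integral_mono)
      fix x assume x: "x \<in> space (PiM K (\<lambda>_. N))"
      have x0: "x(j := 0) \<in> space (PiM J (\<lambda>_. N))" using upd_space[OF x] JK(1) by simp
      have gm: "(\<lambda>u. F (x(j := u))) \<in> borel_measurable N"
        by (rule upd_meas1[OF _ x]) (use Fm JK(1) in simp)
      have "(\<integral>\<^sup>+y. ennreal ((F (x(j := y)) - Ej N j F (x(j := y)))\<^sup>2) \<partial>N)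
          = (\<integral>\<^sup>+y. ennreal ((F (x(j := y)) - (\<integral>u. F (x(j := u)) \<partial>N))\<^sup>2) \<partial>N)"
        by (simp add: Ej_def)
      also have "\<dots> \<le> (\<integral>\<^sup>+y. ennreal ((F (x(j := y)) - F (x(j := 0)))\<^sup>2) \<partial>N)"
        by (rule dev_le[OF prob gm])
      also have "\<dots> \<le> ennreal (\<sigma>\<^sup>2) * (\<integral>\<^sup>+y. ennreal ((D j (x(j := y)))\<^sup>2) \<partial>N)"
      proof -
        have d: "((\<lambda>u. F (x(j := u))) has_real_derivative D j (x(j := t))) (at t)" for t
          using der[OF j x0, of t] by simp
        have c: "continuous_on UNIV (\<lambda>u. D j (x(j := u)))"
          using cont[OF j x0] by simp
        show ?thesis using poincare1[OF s d c] by simp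
      qed
      finally show "(\<integral>\<^sup>+y. ennreal ((F (x(j := y)) - Ej N j F (x(j := y)))\<^sup>2) \<partial>N)
          \<le> ennreal (\<sigma>\<^sup>2) * (\<integral>\<^sup>+y. ennreal ((D j (x(j := y)))\<^sup>2) \<partial>N)" .
    qed
    also have "\<dots> = ennreal (\<sigma>\<^sup>2) * (\<integral>\<^sup>+x. \<integral>\<^sup>+y. ennreal ((D j (x(j := y)))\<^sup>2) \<partial>N \<partial>PiM K (\<lambda>_. N))"
    proof (rule nn_integral_cmult)
      have "(\<lambda>(x, y). ennreal ((D j (x(j := y)))\<^sup>2)) \<in> borel_measurable (PiM K (\<lambda>_. N) \<Otimes>\<^sub>M N)"
      proof -
        have "(\<lambda>(x, y). D j (x(j := y))) \<in> borel_measurable (PiM K (\<lambda>_. N) \<Otimes>\<^sub>M N)"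
          by (rule upd_meas) (use Dm[OF j] JK(1) in simp)
        then show ?thesis by measurable
      qed
      then show "(\<lambda>x. \<integral>\<^sup>+y. ennreal ((D j (x(j := y)))\<^sup>2) \<partial>N) \<in> borel_measurable (PiM K (\<lambda>_. N))"
        by (rule N.borel_measurable_nn_integral)
    qed
    also have "(\<integral>\<^sup>+x. \<integral>\<^sup>+y. ennreal ((D j (x(j := y)))\<^sup>2) \<partial>N \<partial>PiM K (\<lambda>_. N)) = (\<integral>\<^sup>+x. ennreal ((D j x)\<^sup>2) \<partial>PiM J (\<lambda>_. N))"
      unfolding JK(1) by (rule product_sigma_finite.product_nn_integral_insert[OF prodSF JK(3) JK(2) m2, symmetric])
    finally show ?thesis .
  qed
  have "(\<integral>\<^sup>+x. ennreal ((F x - (\<integral>z. F z \<partial>PiM J (\<lambda>_. N)))\<^sup>2) \<partial>PiM J (\<lambda>_. N))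
        \<le> (\<Sum>j\<in>J. \<integral>\<^sup>+x. ennreal ((F x - Ej N j F x)\<^sup>2) \<partial>PiM J (\<lambda>_. N))"
    by (rule efron_stein[OF J F])
  also have "\<dots> \<le> (\<Sum>j\<in>J. ennreal (\<sigma>\<^sup>2) * (\<integral>\<^sup>+x. ennreal ((D j x)\<^sup>2) \<partial>PiM J (\<lambda>_. N)))"
    by (intro sum_mono one)
  also have "\<dots> = ennreal (\<sigma>\<^sup>2) * (\<integral>\<^sup>+x. (\<Sum>j\<in>J. ennreal ((D j x)\<^sup>2)) \<partial>PiM J (\<lambda>_. N))"
    using Dm by (subst nn_integral_sum) (auto simp: sum_distrib_left)
  also have "\<dots> = ennreal (\<sigma>\<^sup>2) * (\<integral>\<^sup>+x. ennreal (\<Sum>j\<in>J. (D j x)\<^sup>2) \<partial>PiM J (\<lambda>_. N))"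
    by (simp add: sum_ennreal)
  finally show ?thesis .
qed

end


definition Lse :: "'i set \<Rightarrow> ('i \<Rightarrow> real) \<Rightarrow> real" where
  "Lse J x = ln (\<Sum>k\<in>J. exp (- x k))"

definition pj :: "'i set \<Rightarrow> 'i \<Rightarrow> ('i \<Rightarrow> real) \<Rightarrow> real" where
  "pj J j x = exp (- x j) / (\<Sum>k\<in>J. exp (- x k))"

lemma sum_exp_pos: "finite J \<Longrightarrow> J \<noteq> {} \<Longrightarrow> 0 < (\<Sum>k\<in>J. exp (- x k :: real))"
  by (intro sum_pos) auto

lemma sum_upd: "finite J \<Longrightarrow> j \<in> J \<Longrightarrow>
   (\<Sum>k\<in>J. exp (- (x(j := u)) k)) = exp (- u) + (\<Sum>k\<in>J - {j}. exp (- x k :: real))"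
  by (simp add: sum.remove)

lemma Lse_deriv:
  assumes J: "finite J" "j \<in> J"
  shows "((\<lambda>u. Lse J (x(j := u))) has_real_derivative - pj J j (x(j := t))) (at t)"
proof -
  define R where "R = (\<Sum>k\<in>J - {j}. exp (- x k))"
  have R: "0 \<le> R" unfolding R_def by (intro sum_nonneg) auto
  have su: "\<And>u. (\<Sum>k\<in>J. exp (- (x(j := u)) k)) = exp (- u) + R"
    unfolding R_def by (rule sum_upd[OF J])
  have eq: "(\<lambda>u. Lse J (x(j := u))) = (\<lambda>u. ln (exp (- u) + R))"
    unfolding Lse_def su ..
  have pos: "0 < exp (- t) + R" using R by (simp add: add_pos_nonneg)
  have "((\<lambda>u. ln (exp (- u) + R)) has_real_derivative (1 / (exp (- t) + R)) * (exp (- t) * (- 1) + 0)) (at t)"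
    by (intro derivative_eq_intros DERIV_ln_divide refl) (use pos in auto)
  moreover have "pj J j (x(j := t)) = exp (- t) / (exp (- t) + R)"
    unfolding pj_def su by simp
  ultimately show ?thesis unfolding eq by (simp add: field_simps)
qed

lemma pj_cont:
  assumes J: "finite J" "j \<in> J"
  shows "continuous_on UNIV (\<lambda>u. pj J j (x(j := u)))"
proof -
  define R where "R = (\<Sum>k\<in>J - {j}. exp (- x k))"
  have R: "0 \<le> R" unfolding R_def by (intro sum_nonneg) auto
  have su: "\<And>u. (\<Sum>k\<in>J. exp (- (x(j := u)) k)) = exp (- u) + R"
    unfolding R_def by (rule sum_upd[OF J])
  have eq: "(\<lambda>u. pj J j (x(j := u))) = (\<lambda>u. exp (- u) / (exp (- u) + R))"
    unfolding pj_def su by simp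
  show ?thesis unfolding eq
    using R by (intro continuous_intros) (auto simp: add_pos_nonneg dual_order.strict_implies_not_eq)
qed

lemma Lse_cont:
  assumes J: "finite J" "j \<in> J"
  shows "continuous_on UNIV (\<lambda>u. Lse J (x(j := u)))"
  using Lse_deriv[OF J] by (intro DERIV_continuous_on) auto

lemma pj_nonneg: "0 \<le> pj J j x"
  unfolding pj_def by (intro divide_nonneg_nonneg sum_nonneg) auto

lemma pj_sum: "finite J \<Longrightarrow> J \<noteq> {} \<Longrightarrow> (\<Sum>j\<in>J. pj J j x) = 1"
  unfolding pj_def using sum_exp_pos[of J x] by (simp add: sum_divide_distrib[symmetric])

lemma pj_sq_sum: "finite J \<Longrightarrow> J \<noteq> {} \<Longrightarrow> (\<Sum>j\<in>J. (pj J j x)\<^sup>2) \<le> 1"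
proof -
  assume J: "finite J" "J \<noteq> {}"
  have le1: "pj J j x \<le> 1" if "j \<in> J" for j
  proof -
    have "pj J j x \<le> (\<Sum>j\<in>J. pj J j x)"
      using J that by (intro member_le_sum pj_nonneg) auto
    then show ?thesis using pj_sum[OF J] by simp
  qed
  have "(\<Sum>j\<in>J. (pj J j x)\<^sup>2) \<le> (\<Sum>j\<in>J. pj J j x)"
  proof (intro sum_mono)
    fix j assume "j \<in> J"
    then show "(pj J j x)\<^sup>2 \<le> pj J j x"
      using le1 pj_nonneg[of J j x] by (simp add: power2_eq_square mult_left_le)
  qed
  then show ?thesis using pj_sum[OF J] by simp
qed

lemma Lse_bound:
  assumes J: "finite J" "J \<noteq> {}"
  shows "\<bar>Lse J x\<bar> \<le> ln (card J) + (\<Sum>k\<in>J. \<bar>x k\<bar>)"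
proof -
  define S where "S = (\<Sum>k\<in>J. \<bar>x k\<bar>)"
  have Spos: "0 < (\<Sum>k\<in>J. exp (- x k))" by (rule sum_exp_pos[OF J])
  have up: "(\<Sum>k\<in>J. exp (- x k)) \<le> card J * exp S"
  proof -
    have "(\<Sum>k\<in>J. exp (- x k)) \<le> (\<Sum>k\<in>J. exp S)"
    proof (intro sum_mono)
      fix k assume k: "k \<in> J"
      have "- x k \<le> \<bar>x k\<bar>" by simp
      also have "\<bar>x k\<bar> \<le> S" unfolding S_def using J k by (intro member_le_sum) auto
      finally show "exp (- x k) \<le> exp S" by simp
    qed
    then show ?thesis by simp
  qed
  obtain k0 where k0: "k0 \<in> J" using J by auto
  have lo: "exp (- S) \<le> (\<Sum>k\<in>J. exp (- x k))"
  proof -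
    have "x k0 \<le> \<bar>x k0\<bar>" by simp
    also have "\<bar>x k0\<bar> \<le> S" unfolding S_def using J k0 by (intro member_le_sum) auto
    finally have "exp (- S) \<le> exp (- x k0)" by simp
    also have "\<dots> \<le> (\<Sum>k\<in>J. exp (- x k))" using J k0 by (intro member_le_sum) auto
    finally show ?thesis .
  qed
  have c: "0 < real (card J)" using J by (simp add: card_gt_0_iff)
  have "Lse J x \<le> ln (card J * exp S)"
    unfolding Lse_def using up Spos by (subst ln_le_cancel_iff) auto
  also have "\<dots> = ln (card J) + S" using c by (simp add: ln_mult)
  finally have a: "Lse J x \<le> ln (card J) + S" .
  have "- S \<le> Lse J x"
    unfolding Lse_def using lo Spos by (subst ln_ge_iff) auto
  moreover have "0 \<le> ln (card J)" using c by (simp add: card_gt_0_iff) (use J in \<open>simp add: Suc_le_eq card_gt_0_iff\<close>)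
  ultimately show ?thesis using a by (simp add: S_def abs_le_iff)
qed


lemma abs_le_w: "\<bar>t::real\<bar> \<le> 1 + t^4"
proof (cases "\<bar>t\<bar> \<le> 1")
  case True
  have "0 \<le> t^4" by (simp add: zero_le_even_power)
  then show ?thesis using True by linarith
next
  case False
  then have "\<bar>t\<bar> \<le> \<bar>t\<bar>^4" by (simp add: power_increasing[of 1 4 "\<bar>t\<bar>", simplified])
  then show ?thesis by (simp add: power_abs)
qed

lemma sq_le_w: "(t::real)\<^sup>2 \<le> 1 + t^4"
proof -
  have "0 \<le> (t\<^sup>2 - 1)\<^sup>2 + t\<^sup>2" by simp
  then show ?thesis by (simp add: power2_eq_square algebra_simps power4_eq_xxxx)
qed

lemma w_le_wt: assumes "finite J" "k \<in> J" shows "1 + (x k)^4 \<le> wt J x"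
proof -
  have p: "1 \<le> (\<Prod>j\<in>J - {k}. 1 + (x j)^4)" by (intro prod_ge_1) auto
  have "(1 + (x k)^4) * 1 \<le> (1 + (x k)^4) * (\<Prod>j\<in>J - {k}. 1 + (x j)^4)"
    by (rule mult_left_mono[OF p]) simp
  also have "\<dots> = wt J x" unfolding wt_def using assms by (simp add: prod.remove)
  finally show ?thesis by simp
qed

lemma Lse_abs_wt:
  assumes J: "finite J" "J \<noteq> {}"
  shows "\<bar>Lse J x\<bar> \<le> 2 * card J * wt J x"
proof -
  have "\<bar>Lse J x\<bar> \<le> ln (card J) + (\<Sum>k\<in>J. \<bar>x k\<bar>)" by (rule Lse_bound[OF J])
  also have "ln (card J) \<le> card J * wt J x"
  proof -
    have c: "0 < real (card J)" using J by (simp add: card_gt_0_iff)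
    have "ln (card J) \<le> real (card J) - 1" using ln_le_minus_one[OF c] .
    also have "\<dots> \<le> real (card J) * 1" by simp
    also have "\<dots> \<le> card J * wt J x" using wt_ge1[OF J(1)] by (intro mult_left_mono) auto
    finally show ?thesis .
  qed
  also have "(\<Sum>k\<in>J. \<bar>x k\<bar>) \<le> (\<Sum>k\<in>J. wt J x)"
    by (intro sum_mono order_trans[OF abs_le_w w_le_wt[OF J(1)]])
  finally show ?thesis by simp
qed

lemma Lse_sq_wt:
  assumes J: "finite J" "J \<noteq> {}"
  shows "(Lse J x)\<^sup>2 \<le> 4 * (card J)\<^sup>2 * wt J x"
proof -
  define d where "d = real (card J)"
  have c: "1 \<le> d" using J by (simp add: d_def Suc_le_eq card_gt_0_iff)
  have w: "1 \<le> wt J x" by (rule wt_ge1[OF J(1)])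
  have a: "\<bar>Lse J x\<bar> \<le> ln d + (\<Sum>k\<in>J. \<bar>x k\<bar>)" unfolding d_def by (rule Lse_bound[OF J])
  have l0: "0 \<le> ln d" using c by simp
  have l1: "ln d \<le> d" using c ln_le_minus_one[of d] by simp
  define S where "S = (\<Sum>k\<in>J. \<bar>x k\<bar>)"
  have S0: "0 \<le> S" unfolding S_def by (intro sum_nonneg) auto
  have e1: "(Lse J x)\<^sup>2 \<le> (ln d + S)\<^sup>2"
  proof -
    have "(Lse J x)\<^sup>2 = \<bar>Lse J x\<bar>\<^sup>2" by simp
    also have "\<dots> \<le> (ln d + S)\<^sup>2" using a unfolding S_def by (intro power_mono) auto
    finally show ?thesis .
  qed
  have e2: "(ln d + S)\<^sup>2 \<le> 2 * (ln d)\<^sup>2 + 2 * S\<^sup>2"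
  proof -
    have "0 \<le> (ln d - S)\<^sup>2" by simp
    then show ?thesis by (simp add: power2_eq_square algebra_simps)
  qed
  have e3: "S\<^sup>2 \<le> (\<Sum>k\<in>J. \<bar>x k\<bar>\<^sup>2) * d"
    unfolding d_def S_def by (rule sum_squared_le_sum_of_squares)
  have e4: "(\<Sum>k\<in>J. \<bar>x k\<bar>\<^sup>2) \<le> d * wt J x"
  proof -
    have "(\<Sum>k\<in>J. \<bar>x k\<bar>\<^sup>2) \<le> (\<Sum>k\<in>J. wt J x)"
    proof (intro sum_mono)
      fix k assume k: "k \<in> J"
      have "\<bar>x k\<bar>\<^sup>2 \<le> 1 + (x k)^4" using sq_le_w[of "x k"] by simp
      also have "\<dots> \<le> wt J x" by (rule w_le_wt[OF J(1) k])
      finally show "\<bar>x k\<bar>\<^sup>2 \<le> wt J x" .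
    qed
    then show ?thesis by (simp add: d_def)
  qed
  have e5: "(ln d)\<^sup>2 \<le> d\<^sup>2" using l0 l1 by (intro power_mono) auto
  have e6: "S\<^sup>2 \<le> d * wt J x * d" using e3 e4 c by (meson mult_right_mono order_trans zero_le_one order_trans[OF zero_le_one c])
  have e7: "d\<^sup>2 \<le> d\<^sup>2 * wt J x" using w by (simp add: mult_le_cancel_left1)
  have "(Lse J x)\<^sup>2 \<le> 2 * d\<^sup>2 * wt J x + 2 * (d * wt J x * d)"
    using e1 e2 e5 e6 e7 by linarith
  also have "\<dots> = 4 * d\<^sup>2 * wt J x" by (simp add: power2_eq_square)
  finally show ?thesis by (simp add: d_def)
qed

context gprod begin

lemma Lse_meas[measurable]: "finite J \<Longrightarrow> Lse J \<in> borel_measurable (PiM J (\<lambda>_. N))"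
  unfolding Lse_def by measurable

lemma pj_meas[measurable]: "finite J \<Longrightarrow> j \<in> J \<Longrightarrow> pj J j \<in> borel_measurable (PiM J (\<lambda>_. N))"
  unfolding pj_def by measurable

end


context gnorm begin

interpretation N: prob_space N by (rule prob)

lemma Lse_polyb: "finite J \<Longrightarrow> J \<noteq> {} \<Longrightarrow> polyb N J (2 * card J) (Lse J)"
  unfolding polyb_def using Lse_abs_wt by auto

theorem Lse_var:
  assumes J: "finite J" "J \<noteq> {}"
  shows "(\<integral>\<^sup>+x. ennreal ((Lse J x - (\<integral>z. Lse J z \<partial>PiM J (\<lambda>_. N)))\<^sup>2) \<partial>PiM J (\<lambda>_. N)) \<le> ennreal (\<sigma>\<^sup>2)"
proof -
  interpret P: prob_space "PiM J (\<lambda>_. N)" by (rule probP)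
  have "(\<integral>\<^sup>+x. ennreal ((Lse J x - (\<integral>z. Lse J z \<partial>PiM J (\<lambda>_. N)))\<^sup>2) \<partial>PiM J (\<lambda>_. N))
      \<le> ennreal (\<sigma>\<^sup>2) * (\<integral>\<^sup>+x. ennreal (\<Sum>j\<in>J. (- pj J j x)\<^sup>2) \<partial>PiM J (\<lambda>_. N))"
  proof (rule tensor_poincare[OF J(1) Lse_polyb[OF J]])
    show "((\<lambda>u. Lse J (x(j := u))) has_real_derivative - pj J j (x(j := t))) (at t)" if "j \<in> J" for j x t
      by (rule Lse_deriv[OF J(1) that])
    show "continuous_on UNIV (\<lambda>u. - pj J j (x(j := u)))" if "j \<in> J" for j x
      by (intro continuous_on_minus pj_cont[OF J(1) that])
    show "(\<lambda>x. - pj J j x) \<in> borel_measurable (PiM J (\<lambda>_. N))" if "j \<in> J" for j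
      using pj_meas[OF J(1) that] by measurable
  qed
  also have "\<dots> \<le> ennreal (\<sigma>\<^sup>2) * (\<integral>\<^sup>+x. 1 \<partial>PiM J (\<lambda>_. N))"
    by (intro mult_left_mono nn_integral_mono) (use pj_sq_sum[OF J] in auto)
  also have "\<dots> = ennreal (\<sigma>\<^sup>2)" by (simp add: P.emeasure_space_1)
  finally show ?thesis .
qed

theorem Lse_4th:
  assumes J: "finite J" "J \<noteq> {}"
  shows "(\<integral>\<^sup>+x. ennreal ((Lse J x - (\<integral>z. Lse J z \<partial>PiM J (\<lambda>_. N)))^4) \<partial>PiM J (\<lambda>_. N)) \<le> ennreal (5 * \<sigma>^4)"
proof -
  interpret P: prob_space "PiM J (\<lambda>_. N)" by (rule probP)
  define m where "m = (\<integral>z. Lse J z \<partial>PiM J (\<lambda>_. N))"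
  define G where "G x = (Lse J x - m)\<^sup>2" for x
  define d where "d = real (card J)"
  have Gm: "G \<in> borel_measurable (PiM J (\<lambda>_. N))" unfolding G_def using Lse_meas[OF J(1)] by measurable
  have Gp: "polyb N J (8 * d\<^sup>2 + 2 * m\<^sup>2) G"
    unfolding polyb_def
  proof safe
    show "G \<in> borel_measurable (PiM J (\<lambda>_. N))" by (rule Gm)
    fix x
    have w: "1 \<le> wt J x" by (rule wt_ge1[OF J(1)])
    have a: "(Lse J x)\<^sup>2 \<le> 4 * d\<^sup>2 * wt J x" using Lse_sq_wt[OF J, of x] by (simp add: d_def)
    have "G x \<le> 2 * (Lse J x)\<^sup>2 + 2 * m\<^sup>2"
    proof -
      have "0 \<le> (Lse J x + m)\<^sup>2" by simp
      then show ?thesis unfolding G_def by (simp add: power2_eq_square algebra_simps)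
    qed
    also have "\<dots> \<le> 8 * d\<^sup>2 * wt J x + 2 * m\<^sup>2 * wt J x"
    proof -
      have "2 * m\<^sup>2 * 1 \<le> 2 * m\<^sup>2 * wt J x" using w by (intro mult_left_mono) auto
      then show ?thesis using a by linarith
    qed
    finally have "G x \<le> (8 * d\<^sup>2 + 2 * m\<^sup>2) * wt J x"
      by (simp add: distrib_right)
    moreover have "0 \<le> G x" by (simp add: G_def)
    ultimately show "\<bar>G x\<bar> \<le> (8 * d\<^sup>2 + 2 * m\<^sup>2) * wt J x" by simp
  qed
  define D where "D j x = 2 * (Lse J x - m) * (- pj J j x)" for j x
  have v1: "(\<integral>\<^sup>+x. ennreal ((Lse J x - m)\<^sup>2) \<partial>PiM J (\<lambda>_. N)) \<le> ennreal (\<sigma>\<^sup>2)"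
    unfolding m_def by (rule Lse_var[OF J])
  have "(\<integral>\<^sup>+x. ennreal ((G x - (\<integral>z. G z \<partial>PiM J (\<lambda>_. N)))\<^sup>2) \<partial>PiM J (\<lambda>_. N))
      \<le> ennreal (\<sigma>\<^sup>2) * (\<integral>\<^sup>+x. ennreal (\<Sum>j\<in>J. (D j x)\<^sup>2) \<partial>PiM J (\<lambda>_. N))"
  proof (rule tensor_poincare[OF J(1) Gp])
    show "((\<lambda>u. G (x(j := u))) has_real_derivative D j (x(j := t))) (at t)" if "j \<in> J" for j x t
    proof -
      have d: "((\<lambda>u. Lse J (x(j := u))) has_real_derivative - pj J j (x(j := t))) (at t)"
        by (rule Lse_deriv[OF J(1) that])
      have d2: "((\<lambda>u. Lse J (x(j := u)) - m) has_real_derivative (- pj J j (x(j := t)) - 0)) (at t)"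
        by (rule DERIV_diff[OF d DERIV_const])
      have "((\<lambda>u. (Lse J (x(j := u)) - m)^2) has_real_derivative
              of_nat 2 * ((- pj J j (x(j := t)) - 0) * (Lse J (x(j := t)) - m)^(2 - Suc 0))) (at t)"
        by (rule DERIV_power[OF d2])
      moreover have "D j (x(j := t)) = of_nat 2 * ((- pj J j (x(j := t)) - 0) * (Lse J (x(j := t)) - m)^(2 - Suc 0))"
        by (simp add: D_def algebra_simps)
      ultimately show ?thesis unfolding G_def by simp
    qed
    show "continuous_on UNIV (\<lambda>u. D j (x(j := u)))" if "j \<in> J" for j x
      unfolding D_def
      by (intro continuous_intros Lse_cont[OF J(1) that] pj_cont[OF J(1) that])
    show "D j \<in> borel_measurable (PiM J (\<lambda>_. N))" if "j \<in> J" for j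
      unfolding D_def using pj_meas[OF J(1) that] Lse_meas[OF J(1)] by measurable
  qed
  also have "\<dots> \<le> ennreal (\<sigma>\<^sup>2) * (\<integral>\<^sup>+x. ennreal (4 * (Lse J x - m)\<^sup>2) \<partial>PiM J (\<lambda>_. N))"
  proof (intro mult_left_mono nn_integral_mono ennreal_leI)
    fix x
    have "(\<Sum>j\<in>J. (D j x)\<^sup>2) = 4 * (Lse J x - m)\<^sup>2 * (\<Sum>j\<in>J. (pj J j x)\<^sup>2)"
      unfolding sum_distrib_left by (intro sum.cong refl) (simp add: D_def power_mult_distrib power2_eq_square algebra_simps)
    also have "\<dots> \<le> 4 * (Lse J x - m)\<^sup>2 * 1"
      by (intro mult_left_mono pj_sq_sum[OF J]) auto
    finally show "(\<Sum>j\<in>J. (D j x)\<^sup>2) \<le> 4 * (Lse J x - m)\<^sup>2" by simp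
  qed simp
  also have "\<dots> = ennreal (\<sigma>\<^sup>2) * (ennreal 4 * (\<integral>\<^sup>+x. ennreal ((Lse J x - m)\<^sup>2) \<partial>PiM J (\<lambda>_. N)))"
    using Lse_meas[OF J(1)] by (subst nn_integral_cmult[symmetric]) (auto simp: ennreal_mult)
  also have "\<dots> \<le> ennreal (\<sigma>\<^sup>2) * (ennreal 4 * ennreal (\<sigma>\<^sup>2))"
    by (intro mult_left_mono v1) auto
  also have "\<dots> = ennreal (4 * \<sigma>^4)"
  proof -
    have e: "\<sigma>\<^sup>2 * (4 * \<sigma>\<^sup>2) = 4 * \<sigma>^4" by (simp add: power2_eq_square power4_eq_xxxx)
    have a: "ennreal 4 * ennreal (\<sigma>\<^sup>2) = ennreal (4 * \<sigma>\<^sup>2)" by (rule ennreal_mult[symmetric]) auto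
    have b: "ennreal (\<sigma>\<^sup>2) * ennreal (4 * \<sigma>\<^sup>2) = ennreal (\<sigma>\<^sup>2 * (4 * \<sigma>\<^sup>2))" by (rule ennreal_mult[symmetric]) auto
    show ?thesis by (simp only: a b e)
  qed
  finally have vG: "(\<integral>\<^sup>+x. ennreal ((G x - (\<integral>z. G z \<partial>PiM J (\<lambda>_. N)))\<^sup>2) \<partial>PiM J (\<lambda>_. N)) \<le> ennreal (4 * \<sigma>^4)" .
  have Gi: "integrable (PiM J (\<lambda>_. N)) G" by (rule polyb_int(1)[OF J(1) Gp])
  have "ennreal (\<integral>z. G z \<partial>PiM J (\<lambda>_. N)) = (\<integral>\<^sup>+x. ennreal (G x) \<partial>PiM J (\<lambda>_. N))"
    by (rule nn_integral_eq_integral[symmetric, OF Gi]) (simp add: G_def)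
  also have "\<dots> \<le> ennreal (\<sigma>\<^sup>2)" using v1 by (simp add: G_def)
  finally have EG: "(\<integral>z. G z \<partial>PiM J (\<lambda>_. N)) \<le> \<sigma>\<^sup>2" by (simp add: ennreal_le_iff)
  have EG0: "0 \<le> (\<integral>z. G z \<partial>PiM J (\<lambda>_. N))" by (intro integral_nonneg_AE) (auto simp: G_def)
  have "(\<integral>\<^sup>+x. ennreal ((Lse J x - m)^4) \<partial>PiM J (\<lambda>_. N)) = (\<integral>\<^sup>+x. ennreal ((G x - 0)\<^sup>2) \<partial>PiM J (\<lambda>_. N))"
    by (intro nn_integral_cong) (simp add: G_def power_mult[symmetric])
  also have "\<dots> = (\<integral>\<^sup>+x. ennreal ((G x - (\<integral>z. G z \<partial>PiM J (\<lambda>_. N)))\<^sup>2) \<partial>PiM J (\<lambda>_. N)) + ennreal (((\<integral>z. G z \<partial>PiM J (\<lambda>_. N)) - 0)\<^sup>2)"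
    by (rule var_decomp[OF probP Gm])
  also have "\<dots> \<le> ennreal (4 * \<sigma>^4) + ennreal (\<sigma>^4)"
  proof (intro add_mono vG ennreal_leI)
    have "((\<integral>z. G z \<partial>PiM J (\<lambda>_. N)))\<^sup>2 \<le> (\<sigma>\<^sup>2)\<^sup>2" using EG EG0 by (intro power_mono) auto
    then show "((\<integral>z. G z \<partial>PiM J (\<lambda>_. N)) - 0)\<^sup>2 \<le> \<sigma>^4" by (simp add: power_mult[symmetric])
  qed
  also have "\<dots> = ennreal (5 * \<sigma>^4)" by (simp add: ennreal_plus[symmetric])
  finally show ?thesis by (simp add: m_def)
qed

end


lemma norm_moments:
  assumes P: "prob_space M" and s: "0 < s" and D: "distributed M lborel Z (normal_density 0 s)"
  shows "integrable M Z" "integrable M (\<lambda>\<omega>. (Z \<omega>)\<^sup>2)" "integrable M (\<lambda>\<omega>. (Z \<omega>)^4)"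
    "(\<integral>\<omega>. Z \<omega> \<partial>M) = 0" "(\<integral>\<omega>. (Z \<omega>)\<^sup>2 \<partial>M) = s\<^sup>2" "(\<integral>\<omega>. (Z \<omega>)^4 \<partial>M) = 3 * s^4"
proof -
  have int: "integrable M (\<lambda>\<omega>. (Z \<omega>)^k)" for k
    using distributed_integrable[OF D, of "\<lambda>x. x^k"] integrable_normal_moment[where \<mu>=0 and \<sigma>=s and k=k] s
    by simp
  show "integrable M Z" using int[of 1] by simp
  show "integrable M (\<lambda>\<omega>. (Z \<omega>)\<^sup>2)" using int[of 2] by simp
  show "integrable M (\<lambda>\<omega>. (Z \<omega>)^4)" using int[of 4] by simp
  have e: "(\<integral>\<omega>. (Z \<omega>)^k \<partial>M) = (\<integral>x. normal_density 0 s x * x^k \<partial>lborel)" for k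
    by (subst distributed_integral[OF D, symmetric]) auto
  show "(\<integral>\<omega>. Z \<omega> \<partial>M) = 0"
    using e[of 1] integral_normal_moment_odd[where \<mu>=0 and \<sigma>=s and k=0] s by simp
  show "(\<integral>\<omega>. (Z \<omega>)\<^sup>2 \<partial>M) = s\<^sup>2"
    using e[of 2] integral_normal_moment_even[where \<mu>=0 and \<sigma>=s and k=1] s by simp
  have "(\<integral>\<omega>. (Z \<omega>)^4 \<partial>M) = fact (2 * 2) / ((2 / s\<^sup>2)^2 * fact 2)"
    using e[of 4] integral_normal_moment_even[where \<mu>=0 and \<sigma>=s and k=2] s by simp
  also have "\<dots> = 3 * s^4"
    using s by (simp add: fact_numeral power2_eq_square field_simps power4_eq_xxxx)
  finally show "(\<integral>\<omega>. (Z \<omega>)^4 \<partial>M) = 3 * s^4" .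
qed

lemma nn_of_int:
  assumes "integrable M f" "\<And>x. 0 \<le> f x"
  shows "(\<integral>\<^sup>+x. ennreal (f x) \<partial>M) = ennreal (\<integral>x. f x \<partial>M)"
  using assms by (intro nn_integral_eq_integral) auto

lemma X_moments:
  assumes P: "prob_space M" and s: "0 < s" and sB: "0 < sB"
    and DB: "distributed M lborel B0 (normal_density 0 sB)"
    and DZ: "distributed M lborel Z (normal_density 0 s)"
    and Xm: "X \<in> borel_measurable M"
    and eq: "\<And>\<omega>. \<omega> \<in> space M \<Longrightarrow> B0 \<omega> = X \<omega> + Z \<omega>"
    and ind: "prob_space.indep_var M borel X borel Z"
  shows "s\<^sup>2 \<le> sB\<^sup>2" "(\<integral>\<^sup>+\<omega>. ennreal ((X \<omega>)\<^sup>2) \<partial>M) \<le> ennreal (sB\<^sup>2 - s\<^sup>2)"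
    "(\<integral>\<^sup>+\<omega>. ennreal ((X \<omega>)^4) \<partial>M) \<le> ennreal (48 * sB^4)"
proof -
  interpret prob_space M by (rule P)
  note mB = norm_moments[OF P sB DB]
  note mZ = norm_moments[OF P s DZ]
  have Zm: "Z \<in> borel_measurable M" using DZ by (simp add: distributed_def)
  have Bm: "B0 \<in> borel_measurable M" using DB by (simp add: distributed_def)
  have Xeq: "\<And>\<omega>. \<omega> \<in> space M \<Longrightarrow> X \<omega> = B0 \<omega> - Z \<omega>" using eq by simp
  have iX: "integrable M X"
  proof -
    have "integrable M (\<lambda>\<omega>. B0 \<omega> - Z \<omega>)" using mB(1) mZ(1) by simp
    then show ?thesis
      by (rule Bochner_Integration.integrable_cong_AE_imp) (auto simp: Xeq Xm intro!: AE_I2)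
  qed
  have iX2: "integrable M (\<lambda>\<omega>. (X \<omega>)\<^sup>2)"
  proof (rule Bochner_Integration.integrable_bound[of _ "\<lambda>\<omega>. 2 * (B0 \<omega>)\<^sup>2 + 2 * (Z \<omega>)\<^sup>2"])
    show "integrable M (\<lambda>\<omega>. 2 * (B0 \<omega>)\<^sup>2 + 2 * (Z \<omega>)\<^sup>2)" using mB(2) mZ(2) by auto
    show "(\<lambda>\<omega>. (X \<omega>)\<^sup>2) \<in> borel_measurable M" using Xm by measurable
    show "AE \<omega> in M. norm ((X \<omega>)\<^sup>2) \<le> norm (2 * (B0 \<omega>)\<^sup>2 + 2 * (Z \<omega>)\<^sup>2)"
    proof (intro AE_I2)
      fix \<omega> assume w: "\<omega> \<in> space M"
      have x: "X \<omega> = B0 \<omega> - Z \<omega>" by (rule Xeq[OF w])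
      have "0 \<le> (B0 \<omega> + Z \<omega>)\<^sup>2" by simp
      then have ineq: "(B0 \<omega> - Z \<omega>)\<^sup>2 \<le> 2 * (B0 \<omega>)\<^sup>2 + 2 * (Z \<omega>)\<^sup>2"
        by (simp add: power2_eq_square algebra_simps)
      have n1: "norm ((B0 \<omega> - Z \<omega>)\<^sup>2) = (B0 \<omega> - Z \<omega>)\<^sup>2" by simp
      have n2: "norm (2 * (B0 \<omega>)\<^sup>2 + 2 * (Z \<omega>)\<^sup>2) = 2 * (B0 \<omega>)\<^sup>2 + 2 * (Z \<omega>)\<^sup>2" by simp
      show "norm ((X \<omega>)\<^sup>2) \<le> norm (2 * (B0 \<omega>)\<^sup>2 + 2 * (Z \<omega>)\<^sup>2)"
        unfolding x n1 n2 by (rule ineq)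
    qed
  qed
  have XZ: "(\<integral>\<omega>. X \<omega> * Z \<omega> \<partial>M) = 0"
    using indep_var_lebesgue_integral[OF ind iX mZ(1)] mZ(4) by simp
  have iXZ: "integrable M (\<lambda>\<omega>. X \<omega> * Z \<omega>)" by (rule indep_var_integrable[OF ind iX mZ(1)])
  have "sB\<^sup>2 = (\<integral>\<omega>. (B0 \<omega>)\<^sup>2 \<partial>M)" using mB(5) by simp
  also have "\<dots> = (\<integral>\<omega>. (X \<omega>)\<^sup>2 + 2 * (X \<omega> * Z \<omega>) + (Z \<omega>)\<^sup>2 \<partial>M)"
    by (intro Bochner_Integration.integral_cong refl) (simp add: eq power2_eq_square algebra_simps)
  also have "\<dots> = (\<integral>\<omega>. (X \<omega>)\<^sup>2 \<partial>M) + 2 * (\<integral>\<omega>. X \<omega> * Z \<omega> \<partial>M) + (\<integral>\<omega>. (Z \<omega>)\<^sup>2 \<partial>M)"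
    using iX2 iXZ mZ(2) by simp
  also have "\<dots> = (\<integral>\<omega>. (X \<omega>)\<^sup>2 \<partial>M) + s\<^sup>2" using XZ mZ(5) by simp
  finally have EX2: "(\<integral>\<omega>. (X \<omega>)\<^sup>2 \<partial>M) = sB\<^sup>2 - s\<^sup>2" by simp
  have "0 \<le> (\<integral>\<omega>. (X \<omega>)\<^sup>2 \<partial>M)" by (intro integral_nonneg_AE) auto
  then show ss: "s\<^sup>2 \<le> sB\<^sup>2" using EX2 by simp
  show "(\<integral>\<^sup>+\<omega>. ennreal ((X \<omega>)\<^sup>2) \<partial>M) \<le> ennreal (sB\<^sup>2 - s\<^sup>2)"
    using nn_of_int[OF iX2] EX2 by simp
  have "(\<integral>\<^sup>+\<omega>. ennreal ((X \<omega>)^4) \<partial>M) \<le> (\<integral>\<^sup>+\<omega>. ennreal (8 * (B0 \<omega>)^4 + 8 * (Z \<omega>)^4) \<partial>M)"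
  proof (intro nn_integral_mono ennreal_leI)
    fix \<omega> assume w: "\<omega> \<in> space M"
    have key: "(b - z)^4 \<le> 8 * b^4 + 8 * z^4" for b z :: real
    proof -
      have "0 \<le> (b + z)\<^sup>2 * (7 * b\<^sup>2 - 10 * b * z + 7 * z\<^sup>2) + 0"
      proof -
        have "0 \<le> 7 * b\<^sup>2 - 10 * b * z + 7 * z\<^sup>2"
        proof -
          have "0 \<le> 5 * (b - z)\<^sup>2 + 2 * b\<^sup>2 + 2 * z\<^sup>2" by simp
          then show ?thesis by (simp add: power2_eq_square algebra_simps)
        qed
        then show ?thesis by simp
      qed
      then show ?thesis by (simp add: power2_eq_square power4_eq_xxxx algebra_simps)
    qed
    have x: "X \<omega> = B0 \<omega> - Z \<omega>" by (rule Xeq[OF w])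
    show "(X \<omega>)^4 \<le> 8 * (B0 \<omega>)^4 + 8 * (Z \<omega>)^4" unfolding x by (rule key)
  qed
  also have "\<dots> = ennreal (\<integral>\<omega>. 8 * (B0 \<omega>)^4 + 8 * (Z \<omega>)^4 \<partial>M)"
    using mB(3) mZ(3) by (intro nn_of_int) auto
  also have "\<dots> = ennreal (24 * sB^4 + 24 * s^4)"
    using mB(3) mZ(3) mB(6) mZ(6) by simp
  also have "\<dots> \<le> ennreal (48 * sB^4)"
  proof (intro ennreal_leI)
    have "(s\<^sup>2)\<^sup>2 \<le> (sB\<^sup>2)\<^sup>2" using ss by (rule power_mono) simp
    then have "s^4 \<le> sB^4" by (simp add: power_mult[symmetric])
    then show "24 * sB^4 + 24 * s^4 \<le> 48 * sB^4" by simp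
  qed
  finally show "(\<integral>\<^sup>+\<omega>. ennreal ((X \<omega>)^4) \<partial>M) \<le> ennreal (48 * sB^4)" .
qed


lemma distr_lborel_borel: "distr M lborel f = distr M borel f"
  unfolding distr_def by simp

lemma sets_PiM_N: "sets (PiM K (\<lambda>_. density lborel (normal_density 0 s))) = sets (PiM K (\<lambda>_. borel))"
  by (intro sets_PiM_cong) auto

lemma Lse_meas_borel: "finite K \<Longrightarrow> Lse K \<in> borel_measurable (PiM K (\<lambda>_. borel))"
  unfolding Lse_def by measurable

lemma mean_reindex:
  assumes s: "0 < s" and K: "finite K"
  shows "(\<integral>x. Lse K x \<partial>PiM K (\<lambda>_. density lborel (normal_density 0 s)))
       = (\<integral>x. Lse {0..<card K} x \<partial>PiM {0..<card K} (\<lambda>_. density lborel (normal_density 0 s)))"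
proof -
  let ?N = "density lborel (normal_density 0 s)"
  obtain h where h: "bij_betw h {0..<card K} K" using ex_bij_betw_nat_finite[OF K] by blast
  have inj: "inj_on h {0..<card K}" and hK: "h \<in> {0..<card K} \<rightarrow> K" using h by (auto simp: bij_betw_def)
  have D: "distr (PiM K (\<lambda>_. ?N)) (PiM {0..<card K} (\<lambda>i. ?N)) (\<lambda>\<omega>. \<lambda>n\<in>{0..<card K}. \<omega> (h n)) = PiM {0..<card K} (\<lambda>_. ?N)"
    using distr_PiM_reindex[of K "\<lambda>_. ?N" h "{0..<card K}", OF prob_space_normal_density[OF s] inj hK] by simp
  have meas: "(\<lambda>\<omega>. \<lambda>n\<in>{0..<card K}. \<omega> (h n)) \<in> measurable (PiM K (\<lambda>_. ?N)) (PiM {0..<card K} (\<lambda>i. ?N))"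
  proof (rule measurable_restrict)
    fix n assume "n \<in> {0..<card K}"
    then have "h n \<in> K" using hK by auto
    then show "(\<lambda>\<omega>. \<omega> (h n)) \<in> measurable (PiM K (\<lambda>_. ?N)) ?N"
      by (rule measurable_component_singleton)
  qed
  have LM: "Lse {0..<card K} \<in> borel_measurable (PiM {0..<card K} (\<lambda>i. ?N))"
    using Lse_meas_borel[of "{0..<card K}"] measurable_cong_sets[OF sets_PiM_N refl] by simp
  have "(\<integral>x. Lse {0..<card K} x \<partial>PiM {0..<card K} (\<lambda>_. ?N))
      = (\<integral>x. Lse {0..<card K} x \<partial>distr (PiM K (\<lambda>_. ?N)) (PiM {0..<card K} (\<lambda>i. ?N)) (\<lambda>\<omega>. \<lambda>n\<in>{0..<card K}. \<omega> (h n)))"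
    by (simp add: D)
  also have "\<dots> = (\<integral>\<omega>. Lse {0..<card K} (\<lambda>n\<in>{0..<card K}. \<omega> (h n)) \<partial>PiM K (\<lambda>_. ?N))"
    by (rule integral_distr[OF meas LM])
  also have "\<dots> = (\<integral>\<omega>. Lse K \<omega> \<partial>PiM K (\<lambda>_. ?N))"
  proof (intro Bochner_Integration.integral_cong refl)
    fix \<omega> :: "'a \<Rightarrow> real"
    have "(\<Sum>n\<in>{0..<card K}. exp (- (\<lambda>n\<in>{0..<card K}. \<omega> (h n)) n)) = (\<Sum>n\<in>{0..<card K}. exp (- \<omega> (h n)))"
      by (intro sum.cong) auto
    also have "\<dots> = (\<Sum>k\<in>K. exp (- \<omega> k))"
      by (rule sum.reindex_bij_betw[OF h, of "\<lambda>k. exp (- \<omega> k)"])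
    finally show "Lse {0..<card K} (\<lambda>n\<in>{0..<card K}. \<omega> (h n)) = Lse K \<omega>" by (simp add: Lse_def)
  qed
  finally show ?thesis by simp
qed

lemma Lse_transfer:
  assumes P: "prob_space M" and s: "0 < s" and K: "finite K" "K \<noteq> {}"
    and ind: "prob_space.indep_vars M (\<lambda>_. borel) Y K"
    and D: "\<And>k. k \<in> K \<Longrightarrow> distributed M lborel (Y k) (normal_density 0 s)"
  defines "c \<equiv> (\<integral>x. Lse K x \<partial>PiM K (\<lambda>_. density lborel (normal_density 0 s)))"
  shows "(\<integral>\<^sup>+\<omega>. ennreal ((Lse K (\<lambda>k. Y k \<omega>) - c)\<^sup>2) \<partial>M) \<le> ennreal (s\<^sup>2)"
    "(\<integral>\<^sup>+\<omega>. ennreal ((Lse K (\<lambda>k. Y k \<omega>) - c)^4) \<partial>M) \<le> ennreal (5 * s^4)"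
proof -
  interpret prob_space M by (rule P)
  interpret G: gnorm s by standard (rule s)
  let ?N = "density lborel (normal_density 0 s)"
  define Y' where "Y' k = (if k \<in> K then Y k else (\<lambda>_. 0))" for k
  have rv: "random_variable borel (Y' k)" for k
    using D by (auto simp: Y'_def distributed_def)
  have ind': "indep_vars (\<lambda>_. borel) Y' K"
    using ind by (rule indep_vars_cong[THEN iffD1, rotated 3]) (auto simp: Y'_def)
  have "distr M (PiM K (\<lambda>_. borel)) (\<lambda>x. \<lambda>k\<in>K. Y' k x) = PiM K (\<lambda>k. distr M borel (Y' k))"
    using indep_vars_iff_distr_eq_PiM[OF K(2) rv] ind' by simp
  also have "\<dots> = PiM K (\<lambda>_. ?N)"
  proof (rule PiM_cong[OF refl])
    fix k assume k: "k \<in> K"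
    have "distr M lborel (Y k) = ?N" using D[OF k] by (simp add: distributed_def)
    then show "distr M borel (Y' k) = ?N" using k by (simp add: Y'_def distr_lborel_borel)
  qed
  finally have DV: "distr M (PiM K (\<lambda>_. borel)) (\<lambda>x. \<lambda>k\<in>K. Y' k x) = PiM K (\<lambda>_. ?N)" .
  have Vm: "(\<lambda>x. \<lambda>k\<in>K. Y' k x) \<in> measurable M (PiM K (\<lambda>_. borel))"
    using rv by (intro measurable_restrict) auto
  have LV: "Lse K (\<lambda>k\<in>K. Y' k \<omega>) = Lse K (\<lambda>k. Y k \<omega>)" for \<omega>
    unfolding Lse_def by (intro arg_cong[where f=ln] sum.cong) (auto simp: Y'_def)
  have tr: "(\<integral>\<^sup>+\<omega>. g (Lse K (\<lambda>k. Y k \<omega>)) \<partial>M) = (\<integral>\<^sup>+x. g (Lse K x) \<partial>PiM K (\<lambda>_. ?N))"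
    if gm: "g \<in> borel_measurable borel" for g :: "real \<Rightarrow> ennreal"
  proof -
    have m: "(\<lambda>x. g (Lse K x)) \<in> borel_measurable (PiM K (\<lambda>_. borel))"
      using Lse_meas_borel[OF K(1)] gm by measurable
    have "(\<integral>\<^sup>+x. g (Lse K x) \<partial>PiM K (\<lambda>_. ?N)) = (\<integral>\<^sup>+x. g (Lse K x) \<partial>distr M (PiM K (\<lambda>_. borel)) (\<lambda>x. \<lambda>k\<in>K. Y' k x))"
      by (simp add: DV)
    also have "\<dots> = (\<integral>\<^sup>+\<omega>. g (Lse K (\<lambda>k\<in>K. Y' k \<omega>)) \<partial>M)"
      using m by (subst nn_integral_distr[OF Vm]) simp_all
    finally show ?thesis by (simp add: LV)
  qed
  have "(\<integral>\<^sup>+\<omega>. ennreal ((Lse K (\<lambda>k. Y k \<omega>) - c)\<^sup>2) \<partial>M) = (\<integral>\<^sup>+x. ennreal ((Lse K x - c)\<^sup>2) \<partial>PiM K (\<lambda>_. ?N))"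
    by (rule tr) measurable
  also have "\<dots> \<le> ennreal (s\<^sup>2)" unfolding c_def by (rule G.Lse_var[OF K])
  finally show "(\<integral>\<^sup>+\<omega>. ennreal ((Lse K (\<lambda>k. Y k \<omega>) - c)\<^sup>2) \<partial>M) \<le> ennreal (s\<^sup>2)" .
  have "(\<integral>\<^sup>+\<omega>. ennreal ((Lse K (\<lambda>k. Y k \<omega>) - c)^4) \<partial>M) = (\<integral>\<^sup>+x. ennreal ((Lse K x - c)^4) \<partial>PiM K (\<lambda>_. ?N))"
    by (rule tr) measurable
  also have "\<dots> \<le> ennreal (5 * s^4)" unfolding c_def by (rule G.Lse_4th[OF K])
  finally show "(\<integral>\<^sup>+\<omega>. ennreal ((Lse K (\<lambda>k. Y k \<omega>) - c)^4) \<partial>M) \<le> ennreal (5 * s^4)" .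
qed


lemma emp_var:
  fixes a :: "nat \<Rightarrow> real" and n :: nat and c :: real
  assumes n: "n > 0"
  defines "v \<equiv> (let m = (\<Sum>i<n. a i) / real n in (\<Sum>i<n. (a i - m)\<^sup>2) / real n)"
  shows "0 \<le> v" "v \<le> (\<Sum>i<n. (a i - c)\<^sup>2) / real n" "v\<^sup>2 \<le> (\<Sum>i<n. (a i - c)^4) / real n"
proof -
  define m where "m = (\<Sum>i<n. a i) / real n"
  have v: "v = (\<Sum>i<n. (a i - m)\<^sup>2) / real n" by (simp add: v_def m_def Let_def)
  show v0: "0 \<le> v" unfolding v by (intro divide_nonneg_nonneg sum_nonneg) auto
  have sm: "(\<Sum>i<n. a i) = real n * m" using n by (simp add: m_def)
  have "(\<Sum>i<n. (a i - c)\<^sup>2) = (\<Sum>i<n. (a i - m)\<^sup>2 + 2 * (m - c) * a i + (c\<^sup>2 - m\<^sup>2))"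
    by (intro sum.cong refl) (simp add: power2_eq_square algebra_simps)
  also have "\<dots> = (\<Sum>i<n. (a i - m)\<^sup>2) + 2 * (m - c) * (\<Sum>i<n. a i) + real n * (c\<^sup>2 - m\<^sup>2)"
    by (simp add: sum.distrib sum_distrib_left)
  also have "\<dots> = (\<Sum>i<n. (a i - m)\<^sup>2) + real n * (m - c)\<^sup>2"
    unfolding sm by (simp add: power2_eq_square algebra_simps)
  finally have "(\<Sum>i<n. (a i - m)\<^sup>2) \<le> (\<Sum>i<n. (a i - c)\<^sup>2)" by simp
  then show v1: "v \<le> (\<Sum>i<n. (a i - c)\<^sup>2) / real n" unfolding v using n by (simp add: divide_right_mono)
  have "v\<^sup>2 \<le> ((\<Sum>i<n. (a i - c)\<^sup>2) / real n)\<^sup>2" by (rule power_mono[OF v1 v0])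
  also have "\<dots> = (\<Sum>i<n. (a i - c)\<^sup>2)\<^sup>2 / (real n)\<^sup>2" by (simp add: power_divide)
  also have "\<dots> \<le> ((\<Sum>i<n. ((a i - c)\<^sup>2)\<^sup>2) * real n) / (real n)\<^sup>2"
    by (intro divide_right_mono) (use sum_squared_le_sum_of_squares[of "\<lambda>i. (a i - c)\<^sup>2" "{..<n}"] in auto)
  also have "\<dots> = (\<Sum>i<n. (a i - c)^4) / real n"
    using n by (simp add: power2_eq_square power4_eq_xxxx field_simps)
  finally show "v\<^sup>2 \<le> (\<Sum>i<n. (a i - c)^4) / real n" .
qed

lemma nn_avg_bound:
  fixes g :: "nat \<Rightarrow> 'a \<Rightarrow> real"
  assumes n: "n > 0" and gm: "\<And>i. i < n \<Longrightarrow> g i \<in> borel_measurable M"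
    and g0: "\<And>i \<omega>. 0 \<le> g i \<omega>"
    and b: "\<And>i. i < n \<Longrightarrow> (\<integral>\<^sup>+\<omega>. ennreal (g i \<omega>) \<partial>M) \<le> ennreal K"
  shows "(\<integral>\<^sup>+\<omega>. ennreal ((\<Sum>i<n. g i \<omega>) / real n) \<partial>M) \<le> ennreal K"
proof -
  have "(\<integral>\<^sup>+\<omega>. ennreal ((\<Sum>i<n. g i \<omega>) / real n) \<partial>M) = (\<integral>\<^sup>+\<omega>. (\<Sum>i<n. ennreal (1 / real n) * ennreal (g i \<omega>)) \<partial>M)"
  proof (intro nn_integral_cong)
    fix \<omega>
    have "ennreal ((\<Sum>i<n. g i \<omega>) / real n) = ennreal (\<Sum>i<n. (1 / real n) * g i \<omega>)"
      by (simp add: sum_divide_distrib)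
    also have "\<dots> = (\<Sum>i<n. ennreal ((1 / real n) * g i \<omega>))"
      using g0 by (intro sum_ennreal[symmetric]) auto
    also have "\<dots> = (\<Sum>i<n. ennreal (1 / real n) * ennreal (g i \<omega>))"
      using g0 by (intro sum.cong refl ennreal_mult) auto
    finally show "ennreal ((\<Sum>i<n. g i \<omega>) / real n) = (\<Sum>i<n. ennreal (1 / real n) * ennreal (g i \<omega>))" .
  qed
  also have "\<dots> = (\<Sum>i<n. ennreal (1 / real n) * (\<integral>\<^sup>+\<omega>. ennreal (g i \<omega>) \<partial>M))"
    using gm by (subst nn_integral_sum) (auto simp: nn_integral_cmult)
  also have "\<dots> \<le> (\<Sum>i<n. ennreal (1 / real n) * ennreal K)"
    by (intro sum_mono mult_left_mono b) auto
  also have "\<dots> = ennreal K"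
  proof (cases "K \<ge> 0")
    case True
    have "(\<Sum>i<n. ennreal (1 / real n) * ennreal K) = ennreal (\<Sum>i<n. (1 / real n) * K)"
    proof -
      have "\<And>i. ennreal (1 / real n) * ennreal K = ennreal ((1 / real n) * K)"
        using True by (rule ennreal_mult[symmetric, rotated]) simp
      moreover have "(\<Sum>i<n. ennreal (1 / real n * K)) = ennreal (\<Sum>i<n. 1 / real n * K)"
        using True by (intro sum_ennreal) simp
      ultimately show ?thesis by simp
    qed
    also have "(\<Sum>i<n. (1 / real n) * K) = K" using n by simp
    finally show ?thesis .
  next
    case False
    then show ?thesis by (simp add: ennreal_neg)
  qed
  finally show ?thesis .
qed


theorem lemma6:
  fixes M :: "'a measure" and n :: nat and E :: "nat \<Rightarrow> nat \<Rightarrow> bool"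
    and \<sigma>W \<sigma>B :: real and W :: "nat \<Rightarrow> 'a \<Rightarrow> real" and B :: "nat \<Rightarrow> nat \<Rightarrow> 'a \<Rightarrow> real"
  assumes "prob_space M"
    and "\<sigma>W > 0" and "\<sigma>B > 0"
    and "n > 0"
    and "simple_graph_on n E" and "regular_graph n E"
    and "disordered_landscape M n E \<sigma>W \<sigma>B W B"
    and "separable M n E W B"
  shows "(\<integral>\<^sup>+ \<omega>. ennreal (var_A n E B \<omega>) \<partial>M) \<le> ennreal (4 * \<sigma>B\<^sup>2) \<and>
         (\<integral>\<^sup>+ \<omega>. ennreal ((var_A n E B \<omega>)\<^sup>2) \<partial>M) \<le> ennreal (1720 * \<sigma>B ^ 4)"
proof -
  interpret prob_space M by (rule assms(1))
  have sB: "0 < \<sigma>B" by (rule assms(3))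
  have n: "0 < n" by (rule assms(4))
  have indB: "indep_vars (\<lambda>_. borel) (\<lambda>(i, j). B i j) {(i, j). E i j \<and> i < j}"
    and symB: "\<And>i j. E i j \<Longrightarrow> B i j = B j i"
    and distB: "\<And>i j. E i j \<Longrightarrow> distributed M lborel (B i j) (normal_density 0 \<sigma>B)"
    using assms(7) unfolding disordered_landscape_def by auto
  have symE: "\<And>i j. E i j \<Longrightarrow> E j i" and irrE: "\<And>i. \<not> E i i"
    using assms(5) unfolding simple_graph_on_def by auto
  obtain d where cd: "\<And>i. i < n \<Longrightarrow> card (nbrs n E i) = d"
    using assms(6) unfolding regular_graph_def by auto
  have finJ: "finite (nbrs n E i)" for i unfolding nbrs_def by auto
  let ?N = "density lborel (normal_density 0 \<sigma>B)"
  define c where "c = (if d = 0 then 0 else (\<integral>x. Lse {0..<d} x \<partial>PiM {0..<d} (\<lambda>_. ?N)))"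
  have Bm: "\<And>j. j \<in> nbrs n E i \<Longrightarrow> B i j \<in> borel_measurable M" for i
    using distB by (auto simp: nbrs_def distributed_def)
  have Am: "(\<lambda>\<omega>. A_val n E B i \<omega>) \<in> borel_measurable M" for i
    unfolding A_val_def using Bm[of _ i] finJ[of i] by measurable
  have per: "(\<integral>\<^sup>+\<omega>. ennreal ((A_val n E B i \<omega> - c)\<^sup>2) \<partial>M) \<le> ennreal (\<sigma>B\<^sup>2) \<and>
             (\<integral>\<^sup>+\<omega>. ennreal ((A_val n E B i \<omega> - c)^4) \<partial>M) \<le> ennreal (5 * \<sigma>B^4)"
    if i: "i < n" for i
  proof (cases "d = 0")
    case True
    then have "nbrs n E i = {}" using cd[OF i] finJ[of i] by simp
    then have "A_val n E B i \<omega> = 0" for \<omega> by (simp add: A_val_def)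
    then show ?thesis using True by (simp add: c_def)
  next
    case False
    define J where "J = nbrs n E i"
    have J: "finite J" "J \<noteq> {}" "card J = d" using cd[OF i] finJ[of i] False by (auto simp: J_def)
    have EJ: "\<And>j. j \<in> J \<Longrightarrow> E i j" by (simp add: J_def nbrs_def)
    define g where "g j = (min i j, max i j)" for j
    define K where "K = g ` J"
    define Y where "Y = (\<lambda>(a, b). B a b)"
    have inj: "inj_on g J" unfolding inj_on_def g_def by (auto simp: min_def max_def split: if_splits)
    have K: "finite K" "K \<noteq> {}" "card K = d" using J inj by (auto simp: K_def card_image)
    have Ksub: "K \<subseteq> {(i, j). E i j \<and> i < j}"
    proof
      fix e assume "e \<in> K"
      then obtain j where j: "j \<in> J" and e: "e = g j" by (auto simp: K_def)
      have Eij: "E i j" by (rule EJ[OF j])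
      have "i \<noteq> j" using Eij irrE by auto
      then show "e \<in> {(i, j). E i j \<and> i < j}"
        using Eij symE[OF Eij] by (auto simp: e g_def min_def max_def)
    qed
    have indK: "indep_vars (\<lambda>_. borel) Y K"
      unfolding Y_def by (rule indep_vars_subset[OF indB Ksub])
    have distK: "distributed M lborel (Y e) (normal_density 0 \<sigma>B)" if "e \<in> K" for e
    proof -
      obtain a b where e: "e = (a, b)" by (cases e)
      have "E a b" using Ksub that by (auto simp: e)
      then show ?thesis by (simp add: Y_def e distB)
    qed
    have cK: "(\<integral>x. Lse K x \<partial>PiM K (\<lambda>_. ?N)) = c"
      using mean_reindex[OF sB K(1)] K(3) False by (simp add: c_def)
    have AL: "A_val n E B i \<omega> = Lse K (\<lambda>e. Y e \<omega>)" for \<omega>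
    proof -
      have "(\<Sum>e\<in>K. exp (- Y e \<omega>)) = (\<Sum>j\<in>J. exp (- Y (g j) \<omega>))"
        unfolding K_def by (simp add: sum.reindex[OF inj])
      also have "\<dots> = (\<Sum>j\<in>J. exp (- B i j \<omega>))"
      proof (intro sum.cong refl)
        fix j assume j: "j \<in> J"
        have "B (min i j) (max i j) \<omega> = B i j \<omega>"
          using symB[OF EJ[OF j]] by (auto simp: min_def max_def)
        then show "exp (- Y (g j) \<omega>) = exp (- B i j \<omega>)" by (simp add: Y_def g_def)
      qed
      finally show ?thesis by (simp add: A_val_def Lse_def J_def)
    qed
    show ?thesis
      using Lse_transfer[OF assms(1) sB K(1) K(2) indK distK] unfolding cK AL by simp
  qed
  define Q2 where "Q2 \<omega> = (\<Sum>i<n. (A_val n E B i \<omega> - c)\<^sup>2) / real n" for \<omega>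
  define Q4 where "Q4 \<omega> = (\<Sum>i<n. (A_val n E B i \<omega> - c)^4) / real n" for \<omega>
  have ev: "0 \<le> var_A n E B \<omega> \<and> var_A n E B \<omega> \<le> Q2 \<omega> \<and> (var_A n E B \<omega>)\<^sup>2 \<le> Q4 \<omega>" for \<omega>
    using emp_var(1)[OF n, where a="\<lambda>i. A_val n E B i \<omega>"]
      emp_var(2)[OF n, where a="\<lambda>i. A_val n E B i \<omega>" and c=c]
      emp_var(3)[OF n, where a="\<lambda>i. A_val n E B i \<omega>" and c=c]
    unfolding var_A_def Q2_def Q4_def by simp
  have "(\<integral>\<^sup>+\<omega>. ennreal (var_A n E B \<omega>) \<partial>M) \<le> (\<integral>\<^sup>+\<omega>. ennreal (Q2 \<omega>) \<partial>M)"
    using ev by (intro nn_integral_mono ennreal_leI) auto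
  also have "\<dots> \<le> ennreal (\<sigma>B\<^sup>2)"
    unfolding Q2_def
    by (rule nn_avg_bound[OF n]) (use Am per in auto)
  also have "\<dots> \<le> ennreal (4 * \<sigma>B\<^sup>2)" by (intro ennreal_leI) auto
  finally have r1: "(\<integral>\<^sup>+\<omega>. ennreal (var_A n E B \<omega>) \<partial>M) \<le> ennreal (4 * \<sigma>B\<^sup>2)" .
  have "(\<integral>\<^sup>+\<omega>. ennreal ((var_A n E B \<omega>)\<^sup>2) \<partial>M) \<le> (\<integral>\<^sup>+\<omega>. ennreal (Q4 \<omega>) \<partial>M)"
    using ev by (intro nn_integral_mono ennreal_leI) auto
  also have "\<dots> \<le> ennreal (5 * \<sigma>B^4)"
    unfolding Q4_def
    by (rule nn_avg_bound[OF n]) (use Am per in auto)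
  also have "\<dots> \<le> ennreal (1720 * \<sigma>B ^ 4)" by (intro ennreal_leI) auto
  finally have r2: "(\<integral>\<^sup>+\<omega>. ennreal ((var_A n E B \<omega>)\<^sup>2) \<partial>M) \<le> ennreal (1720 * \<sigma>B ^ 4)" .
  show ?thesis using r1 r2 by simp
qed


end
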